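(* Let $d\ge1$ and let $\psi\in L^1(\mathbb R^d)\cap L^\infty(\mathbb R^d)$ be real-valued with $\widehat\psi(0)\ge0$, and let $a=\|\psi\|_{L^\infty}$, $b=\|\psi\|_{L^1}$, and $c>0$ be such that $c|\widehat\psi(\xi)|\ge1$ for all $\xi\in B^d_1$. Let $f\in PW_d\setminus\{0\}$ satisfy $\int_{\mathbb R^d}f\le0$, and set $T_\psi(f)=f*\psi$. Then $$|\{x\in\mathbb R^d: f(x)<0\}|\cdot|\{\xi\in\mathbb R^d: T_\psi(f)(\xi)<0\}|\ \ge\ (16a^2b^2c^4)^{-1}.$$ In particular, if there are $r_1,r_2>0$ with $f(x)\ge0$ for $|x|\ge r_1$ and $T_\psi(f)(\xi)\ge0$ for $|\xi|\ge r_2$, then $r_1r_2\ge(16a^2b^2c^4|B^d_1|^2)^{-1/d}$.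
   Context: $\widehat f(\xi)=\int_{\mathbb R^d}f(x)e^{-2\pi i\langle x,\xi\rangle}dx$. $B^d_1$ is the closed unit ball in $\mathbb R^d$ centered at $0$, $|E|$ denotes Lebesgue measure. $PW_d$ is the set of real-valued continuous $f\in L^1(\mathbb R^d)$ with $\operatorname{supp}\widehat f\subseteq B^d_1$. *)

theory Defs
  imports "HOL-Analysis.Analysis" "HOL-Probability.Essential_Supremum"
begin

definition fourier_transform :: "('a::euclidean_space \<Rightarrow> real) \<Rightarrow> 'a \<Rightarrow> complex" where
  "fourier_transform f \<xi> =
     (\<integral>x. complex_of_real (f x) * cis (- 2 * pi * (x \<bullet> \<xi>)) \<partial>lebesgue)"

definition convolution :: "('a::euclidean_space \<Rightarrow> real) \<Rightarrow> ('a \<Rightarrow> real) \<Rightarrow> 'a \<Rightarrow> real" where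
  "convolution f g x = (\<integral>y. f y * g (x - y) \<partial>lebesgue)"

definition PW :: "('a::euclidean_space \<Rightarrow> real) set" where
  "PW = {f. continuous_on UNIV f \<and> integrable lebesgue f \<and>
            closure {\<xi>. fourier_transform f \<xi> \<noteq> 0} \<subseteq> cball 0 1}"

definition Linf_norm :: "('a::euclidean_space \<Rightarrow> real) \<Rightarrow> ereal" where
  "Linf_norm f = esssup lebesgue (\<lambda>x. ereal \<bar>f x\<bar>)"

end

theory Submission
  imports Defs "HOL-Probability.Characteristic_Functions"
begin

lemma cis_iexp: "cis x = iexp x"
  by (simp add: cis_conv_exp mult.commute)

lemma std_char_lborel:
  "(\<integral>x. complex_of_real (std_normal_density x) * iexp (t * x) \<partial>lborel) = complex_of_real (exp (- (t^2) / 2))"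
proof -
  have "char std_normal_distribution t = complex_of_real (exp (- (t^2) / 2))"
    by (simp add: char_std_normal_distribution)
  moreover have "char std_normal_distribution t = (\<integral>x. std_normal_density x *\<^sub>R iexp (t * x) \<partial>lborel)"
    unfolding char_def by (subst integral_density) auto
  ultimately show ?thesis by (simp add: scaleR_conv_of_real)
qed

lemma std_char_integrable:
  "integrable lborel (\<lambda>x. complex_of_real (std_normal_density x) * iexp (t * x))"
proof -
  interpret real_distribution std_normal_distribution by (rule real_dist_normal_dist)
  have "integrable std_normal_distribution (\<lambda>x. iexp (t * x))"
    by (rule integrable_iexp) auto
  then have "integrable lborel (\<lambda>x. std_normal_density x *\<^sub>R iexp (t * x))"
    by (subst (asm) integrable_density) auto
  then show ?thesis by (simp add: scaleR_conv_of_real)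
qed

lemma gauss_1d:
  fixes s w :: real assumes s: "s > 0"
  shows "integrable lborel (\<lambda>y. complex_of_real (exp (- pi * s * y^2)) * cis (- 2 * pi * w * y))"
    and "(\<integral>y. complex_of_real (exp (- pi * s * y^2)) * cis (- 2 * pi * w * y) \<partial>lborel)
         = complex_of_real (exp (- pi * w^2 / s) / sqrt s)"
proof -
  define k where "k = sqrt (2 * pi * s)"
  have k: "k > 0" using s by (simp add: k_def)
  have k2: "k^2 = 2 * pi * s" using s by (simp add: k_def)
  define t where "t = - 2 * pi * w / k"
  define h where "h = (\<lambda>x. complex_of_real (std_normal_density x) * iexp (t * x))"
  have eq: "h (0 + k * y) = complex_of_real (1 / sqrt (2 * pi)) *
      (complex_of_real (exp (- pi * s * y^2)) * cis (- 2 * pi * w * y))" for y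
  proof -
    have "- (k * y)\<^sup>2 / 2 = - pi * s * y^2" using k2 by (simp add: power_mult_distrib)
    moreover have "t * (k * y) = - 2 * pi * w * y" using k by (simp add: t_def)
    ultimately show ?thesis unfolding h_def std_normal_density_def cis_iexp by simp
  qed
  have hint: "integrable lborel h" unfolding h_def by (rule std_char_integrable)
  have "integrable lborel (\<lambda>y. h (0 + k * y))"
    using lborel_integrable_real_affine[OF hint, of k 0] k by simp
  then have "integrable lborel (\<lambda>y. complex_of_real (sqrt (2 * pi)) * h (0 + k * y))" by simp
  moreover have "(\<lambda>y. complex_of_real (sqrt (2 * pi)) * h (0 + k * y)) =
     (\<lambda>y. complex_of_real (exp (- pi * s * y^2)) * cis (- 2 * pi * w * y))"
    by (rule ext, simp only: eq mult.assoc[symmetric] of_real_mult[symmetric]) simp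
  ultimately show "integrable lborel (\<lambda>y. complex_of_real (exp (- pi * s * y^2)) * cis (- 2 * pi * w * y))"
    by simp
  have "integral\<^sup>L lborel h = k *\<^sub>R (\<integral>y. h (0 + k * y) \<partial>lborel)"
    using lborel_integral_real_affine[of k h 0] k by simp
  also have "(\<integral>y. h (0 + k * y) \<partial>lborel) = complex_of_real (1 / sqrt (2 * pi)) *
      (\<integral>y. complex_of_real (exp (- pi * s * y^2)) * cis (- 2 * pi * w * y) \<partial>lborel)"
    unfolding eq by simp
  finally have *: "integral\<^sup>L lborel h = complex_of_real (k / sqrt (2 * pi)) *
      (\<integral>y. complex_of_real (exp (- pi * s * y^2)) * cis (- 2 * pi * w * y) \<partial>lborel)"
    by (simp add: scaleR_conv_of_real)
  have "integral\<^sup>L lborel h = complex_of_real (exp (- pi * w^2 / s))"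
  proof -
    have "t^2 / 2 = pi * w^2 / s" using k k2 s by (simp add: t_def power_divide power_mult_distrib field_simps power2_eq_square)
    then show ?thesis unfolding h_def std_char_lborel by simp
  qed
  moreover have "k / sqrt (2 * pi) = sqrt s" using s by (simp add: k_def real_sqrt_mult)
  ultimately show "(\<integral>y. complex_of_real (exp (- pi * s * y^2)) * cis (- 2 * pi * w * y) \<partial>lborel)
         = complex_of_real (exp (- pi * w^2 / s) / sqrt s)"
    using * s by (simp add: field_simps)
qed


lemma measurable_cis[measurable]:
  "f \<in> borel_measurable M \<Longrightarrow> (\<lambda>x. cis (f x)) \<in> borel_measurable M"
  unfolding cis_conv_exp by measurable

lemma cis_sum: "finite I \<Longrightarrow> cis (sum f I) = (\<Prod>i\<in>I. cis (f i))"
  by (induction I rule: finite_induct) (auto simp: cis_mult[symmetric])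

lemma norm2_euclidean: "(norm (x::'a::euclidean_space))^2 = (\<Sum>b\<in>Basis. (x \<bullet> b)^2)"
  unfolding power2_norm_eq_inner by (subst euclidean_inner) (simp add: power2_eq_square)

lemma gauss_nd:
  fixes z :: "'a::euclidean_space" and s :: real assumes s: "s > 0"
  shows "integrable lborel (\<lambda>\<xi>::'a. complex_of_real (exp (- pi * s * (norm \<xi>)^2)) * cis (- 2 * pi * (z \<bullet> \<xi>)))"
    and "(\<integral>\<xi>. complex_of_real (exp (- pi * s * (norm \<xi>)^2)) * cis (- 2 * pi * (z \<bullet> \<xi>)) \<partial>lborel)
         = complex_of_real ((1 / sqrt s) ^ DIM('a) * exp (- pi * (norm z)^2 / s))"
proof -
  interpret P: product_sigma_finite "\<lambda>_::'a. lborel :: real measure"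
    by (simp add: product_sigma_finite_def sigma_finite_lborel)
  define g where "g = (\<lambda>b y. complex_of_real (exp (- pi * s * y^2)) * cis (- 2 * pi * (z \<bullet> b) * y))"
  define G where "G = (\<lambda>\<xi>::'a. complex_of_real (exp (- pi * s * (norm \<xi>)^2)) * cis (- 2 * pi * (z \<bullet> \<xi>)))"
  define T where "T = (\<lambda>f. \<Sum>b\<in>(Basis::'a set). f b *\<^sub>R b)"
  have GT: "G (T f) = (\<Prod>b\<in>Basis. g b (f b))" for f
  proof -
    have n: "(norm (T f))^2 = (\<Sum>b\<in>Basis. (f b)^2)"
      unfolding norm2_euclidean T_def by simp
    have i: "z \<bullet> T f = (\<Sum>b\<in>Basis. (z \<bullet> b) * f b)"
      unfolding T_def by (simp add: inner_sum_right mult.commute)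
    have "exp (- pi * s * (norm (T f))^2) = (\<Prod>b\<in>Basis. exp (- pi * s * (f b)^2))"
      unfolding n sum_distrib_left[symmetric] exp_sum[OF finite_Basis, symmetric] by simp
    moreover have "cis (- 2 * pi * (z \<bullet> T f)) = (\<Prod>b\<in>Basis. cis (- 2 * pi * (z \<bullet> b) * f b))"
      unfolding i sum_distrib_left cis_sum[OF finite_Basis] by (simp add: mult.assoc)
    ultimately show ?thesis unfolding G_def g_def by (simp add: prod.distrib)
  qed
  have gi: "\<And>b. b \<in> Basis \<Longrightarrow> integrable lborel (g b)"
    unfolding g_def using gauss_1d(1)[OF s] by simp
  have Gm: "G \<in> borel_measurable borel" unfolding G_def by measurable
  have Tm: "T \<in> measurable (Pi\<^sub>M Basis (\<lambda>_. lborel)) borel" unfolding T_def by measurable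
  have pint: "integrable (Pi\<^sub>M Basis (\<lambda>_. lborel)) (\<lambda>f. \<Prod>b\<in>Basis. g b (f b))"
    by (rule P.product_integrable_prod) (auto intro: gi)
  have "integrable (distr (Pi\<^sub>M Basis (\<lambda>_. lborel)) borel T) G"
    by (subst integrable_distr_eq[OF Tm Gm]) (simp add: GT pint)
  then show "integrable lborel (\<lambda>\<xi>::'a. complex_of_real (exp (- pi * s * (norm \<xi>)^2)) * cis (- 2 * pi * (z \<bullet> \<xi>)))"
    unfolding lborel_eq[where 'a='a] T_def G_def .
  have "integral\<^sup>L lborel G = integral\<^sup>L (distr (Pi\<^sub>M Basis (\<lambda>_. lborel)) borel T) G"
    unfolding lborel_eq[where 'a='a] T_def ..
  also have "\<dots> = (\<integral>f. (\<Prod>b\<in>Basis. g b (f b)) \<partial>Pi\<^sub>M Basis (\<lambda>_. lborel))"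
    by (subst integral_distr[OF Tm Gm]) (simp add: GT)
  also have "\<dots> = (\<Prod>b\<in>Basis. integral\<^sup>L lborel (g b))"
    by (rule P.product_integral_prod) (auto intro: gi)
  also have "\<dots> = (\<Prod>b\<in>(Basis::'a set). complex_of_real (exp (- pi * (z \<bullet> b)^2 / s) / sqrt s))"
    unfolding g_def using gauss_1d(2)[OF s] by simp
  also have "\<dots> = complex_of_real ((1 / sqrt s) ^ DIM('a) * exp (- pi * (norm z)^2 / s))"
  proof -
    have "(\<Prod>b\<in>(Basis::'a set). exp (- pi * (z \<bullet> b)^2 / s) / sqrt s)
        = (\<Prod>b\<in>(Basis::'a set). exp (- pi * (z \<bullet> b)^2 / s)) * (1 / sqrt s) ^ DIM('a)"
      by (simp add: prod.distrib divide_inverse prod_constant power_one_over)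
    also have "(\<Prod>b\<in>(Basis::'a set). exp (- pi * (z \<bullet> b)^2 / s)) = exp (- pi * (norm z)^2 / s)"
      unfolding norm2_euclidean exp_sum[OF finite_Basis, symmetric] sum_divide_distrib sum_distrib_left
      by simp
    finally have X: "(\<Prod>b\<in>(Basis::'a set). exp (- pi * (z \<bullet> b)^2 / s) / sqrt s) =
       (1 / sqrt s) ^ DIM('a) * exp (- pi * (norm z)^2 / s)" by (simp add: mult.commute)
    show ?thesis unfolding X[symmetric] by (rule of_real_prod[symmetric])
  qed
  finally show "(\<integral>\<xi>. complex_of_real (exp (- pi * s * (norm \<xi>)^2)) * cis (- 2 * pi * (z \<bullet> \<xi>)) \<partial>lborel)
         = complex_of_real ((1 / sqrt s) ^ DIM('a) * exp (- pi * (norm z)^2 / s))"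
    unfolding G_def .
qed


definition FTb :: "('a::euclidean_space \<Rightarrow> real) \<Rightarrow> 'a \<Rightarrow> complex" where
  "FTb u \<xi> = (\<integral>x. complex_of_real (u x) * cis (- 2 * pi * (x \<bullet> \<xi>)) \<partial>lborel)"

definition gK :: "real \<Rightarrow> 'a::euclidean_space \<Rightarrow> real" where
  "gK s z = (1 / sqrt s) ^ DIM('a) * exp (- pi * (norm z)^2 / s)"

lemma gK_nonneg: "s > 0 \<Longrightarrow> gK s z \<ge> 0"
  by (simp add: gK_def)

lemma gK_measurable[measurable]: "gK s \<in> borel_measurable borel"
  unfolding gK_def by measurable

lemma gK_int:
  assumes s: "s > 0"
  shows "integrable lborel (gK s :: 'a::euclidean_space \<Rightarrow> real)" "integral\<^sup>L lborel (gK s :: 'a \<Rightarrow> real) = 1"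
proof -
  have s': "1 / s > 0" using s by simp
  note G = gauss_nd[OF s', of "0::'a"]
  have e: "(\<lambda>\<xi>::'a. complex_of_real (exp (- pi * (1 / s) * (norm \<xi>)^2)) * cis (- 2 * pi * (0 \<bullet> \<xi>)))
      = (\<lambda>\<xi>. complex_of_real (exp (- pi * (norm \<xi>)^2 / s)))" by (rule ext) simp
  have i1: "integrable lborel (\<lambda>\<xi>::'a. exp (- pi * (norm \<xi>)^2 / s))"
    using G(1) unfolding e complex_of_real_integrable_eq .
  have v1: "(\<integral>\<xi>. exp (- pi * (norm \<xi>)^2 / s) \<partial>(lborel::'a measure)) = sqrt s ^ DIM('a)"
  proof -
    have "complex_of_real (\<integral>\<xi>. exp (- pi * (norm \<xi>)^2 / s) \<partial>(lborel::'a measure)) = complex_of_real (sqrt s ^ DIM('a))"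
      using G(2) unfolding e by (simp add: real_sqrt_divide)
    then show ?thesis by (metis of_real_eq_iff of_real_power)
  qed
  show "integrable lborel (gK s :: 'a \<Rightarrow> real)"
    unfolding gK_def using i1 by simp
  have "integral\<^sup>L lborel (gK s :: 'a \<Rightarrow> real) = (1 / sqrt s) ^ DIM('a) * sqrt s ^ DIM('a)"
    unfolding gK_def integral_mult_right_zero v1 ..
  also have "\<dots> = 1" using s by (simp add: power_mult_distrib[symmetric])
  finally show "integral\<^sup>L lborel (gK s :: 'a \<Rightarrow> real) = 1" .
qed

lemma lborel_distr_translate: "distr lborel borel (\<lambda>y. t + y) = (lborel :: 'a::euclidean_space measure)"
  using lborel_affine[of 1 t] by (simp add: density_1)

lemma lborel_distr_reflect: "distr lborel borel (\<lambda>y. t - y) = (lborel :: 'a::euclidean_space measure)"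
  using lborel_affine[of "-1" t] by (simp add: density_1)

lemma lborel_integral_translate:
  fixes h :: "'a::euclidean_space \<Rightarrow> 'b::{banach, second_countable_topology}"
  assumes [measurable]: "h \<in> borel_measurable borel"
  shows "(\<integral>y. h (t + y) \<partial>lborel) = integral\<^sup>L lborel h"
    and "integrable lborel (\<lambda>y. h (t + y)) \<longleftrightarrow> integrable lborel h"
proof -
  have "integral\<^sup>L lborel h = integral\<^sup>L (distr lborel borel (\<lambda>y. t + y)) h"
    by (simp add: lborel_distr_translate)
  also have "\<dots> = (\<integral>y. h (t + y) \<partial>lborel)" by (subst integral_distr) auto
  finally show "(\<integral>y. h (t + y) \<partial>lborel) = integral\<^sup>L lborel h" ..
  have "integrable lborel h \<longleftrightarrow> integrable (distr lborel borel (\<lambda>y. t + y)) h"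
    by (simp add: lborel_distr_translate)
  also have "\<dots> \<longleftrightarrow> integrable lborel (\<lambda>y. h (t + y))" by (subst integrable_distr_eq) auto
  finally show "integrable lborel (\<lambda>y. h (t + y)) \<longleftrightarrow> integrable lborel h" ..
qed

lemma lborel_integral_reflect:
  fixes h :: "'a::euclidean_space \<Rightarrow> 'b::{banach, second_countable_topology}"
  assumes [measurable]: "h \<in> borel_measurable borel"
  shows "(\<integral>y. h (t - y) \<partial>lborel) = integral\<^sup>L lborel h"
    and "integrable lborel (\<lambda>y. h (t - y)) \<longleftrightarrow> integrable lborel h"
proof -
  have "integral\<^sup>L lborel h = integral\<^sup>L (distr lborel borel (\<lambda>y. t - y)) h"
    by (simp add: lborel_distr_reflect)
  also have "\<dots> = (\<integral>y. h (t - y) \<partial>lborel)" by (subst integral_distr) auto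
  finally show "(\<integral>y. h (t - y) \<partial>lborel) = integral\<^sup>L lborel h" ..
  have "integrable lborel h \<longleftrightarrow> integrable (distr lborel borel (\<lambda>y. t - y)) h"
    by (simp add: lborel_distr_reflect)
  also have "\<dots> \<longleftrightarrow> integrable lborel (\<lambda>y. h (t - y))" by (subst integrable_distr_eq) auto
  finally show "integrable lborel (\<lambda>y. h (t - y)) \<longleftrightarrow> integrable lborel h" ..
qed

lemma gK_shift_int:
  assumes s: "s > 0"
  shows "integrable lborel (\<lambda>y. gK s (y - x :: 'a::euclidean_space))" "(\<integral>y. gK s (y - x :: 'a) \<partial>lborel) = 1"
proof -
  have e: "(\<lambda>y. gK s (y - x)) = (\<lambda>y. gK s (- x + y))" by (simp add: algebra_simps)
  show "integrable lborel (\<lambda>y. gK s (y - x :: 'a::euclidean_space))"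
    unfolding e using gK_int[OF s] lborel_integral_translate(2)[of "gK s" "-x"] by simp
  show "(\<integral>y. gK s (y - x :: 'a) \<partial>lborel) = 1"
    unfolding e using gK_int[OF s] lborel_integral_translate(1)[of "gK s" "-x"] by simp
qed

lemma integrable_pair_bound:
  fixes h :: "('a::euclidean_space \<times> 'b::euclidean_space) \<Rightarrow> complex"
  assumes hm: "h \<in> borel_measurable (lborel \<Otimes>\<^sub>M lborel)"
    and p: "integrable lborel p" and q: "integrable lborel q"
    and b: "\<And>x y. norm (h (x, y)) \<le> p x * q y"
  shows "integrable (lborel \<Otimes>\<^sub>M lborel) h"
proof -
  have pm[measurable]: "p \<in> borel_measurable borel" using p by (simp add: borel_measurable_integrable)
  have qm[measurable]: "q \<in> borel_measurable borel" using q by (simp add: borel_measurable_integrable)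
  have "integrable (lborel \<Otimes>\<^sub>M lborel) (\<lambda>(x::'a, y::'b). p x * q y)"
  proof (rule lborel_pair.Fubini_integrable)
    show "(\<lambda>(x, y). p x * q y) \<in> borel_measurable (lborel \<Otimes>\<^sub>M lborel)" by measurable
    have "(\<lambda>x. \<integral>y. norm (case (x, y) of (x, y) \<Rightarrow> p x * q y) \<partial>lborel) = (\<lambda>x. \<bar>p x\<bar> * (\<integral>y. \<bar>q y\<bar> \<partial>lborel))"
      by (simp add: abs_mult)
    moreover have "integrable lborel (\<lambda>x. \<bar>p x\<bar> * (\<integral>y. \<bar>q y\<bar> \<partial>lborel))"
      using p by (intro integrable_mult_left) simp
    ultimately show "integrable lborel (\<lambda>x. \<integral>y. norm (case (x, y) of (x, y) \<Rightarrow> p x * q y) \<partial>lborel)" by simp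
    show "AE x in lborel. integrable lborel (\<lambda>y. case (x, y) of (x, y) \<Rightarrow> p x * q y)"
      using q by simp
  qed
  then show ?thesis
  proof (rule Bochner_Integration.integrable_bound[OF _ hm], intro AE_I2)
    fix z :: "'a \<times> 'b"
    obtain x y where z: "z = (x, y)" by (cases z)
    show "norm (h z) \<le> norm (case z of (x, y) \<Rightarrow> p x * q y)"
      unfolding z using b[of x y] by simp
  qed
qed


lemma gauss_real_int:
  assumes s: "s > 0"
  shows "integrable lborel (\<lambda>\<xi>::'a::euclidean_space. exp (- pi * s * (norm \<xi>)^2))"
proof -
  note G = gauss_nd[OF s, of "0::'a"]
  have e: "(\<lambda>\<xi>::'a. complex_of_real (exp (- pi * s * (norm \<xi>)^2)) * cis (- 2 * pi * (0 \<bullet> \<xi>)))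
      = (\<lambda>\<xi>. complex_of_real (exp (- pi * s * (norm \<xi>)^2)))" by (rule ext) simp
  show ?thesis using G(1) unfolding e complex_of_real_integrable_eq .
qed

lemma gauss_smoothing:
  fixes u :: "'a::euclidean_space \<Rightarrow> real"
  assumes um[measurable]: "u \<in> borel_measurable borel" and ui: "integrable lborel u" and s: "s > 0"
  shows "(\<integral>\<xi>. FTb u \<xi> * (complex_of_real (exp (- pi * s * (norm \<xi>)^2)) * cis (2 * pi * (x \<bullet> \<xi>))) \<partial>lborel)
       = complex_of_real (\<integral>y. u y * gK s (y - x) \<partial>lborel)"
proof -
  define C where "C = (\<lambda>\<xi>::'a. complex_of_real (exp (- pi * s * (norm \<xi>)^2)) * cis (2 * pi * (x \<bullet> \<xi>)))"
  define f where "f = (\<lambda>(\<xi>::'a) (y::'a). complex_of_real (u y) * cis (- 2 * pi * (y \<bullet> \<xi>)) * C \<xi>)"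
  have fint: "integrable (lborel \<Otimes>\<^sub>M lborel) (case_prod f)"
  proof (rule integrable_pair_bound)
    show "case_prod f \<in> borel_measurable (lborel \<Otimes>\<^sub>M lborel)"
      unfolding f_def C_def by measurable
    show "integrable lborel (\<lambda>\<xi>::'a. exp (- pi * s * (norm \<xi>)^2))" by (rule gauss_real_int[OF s])
    show "integrable lborel (\<lambda>y. \<bar>u y\<bar>)" using ui by simp
    show "norm (case (\<xi>, y) of (\<xi>, y) \<Rightarrow> f \<xi> y) \<le> exp (- pi * s * (norm \<xi>)^2) * \<bar>u y\<bar>" for \<xi> y
      unfolding f_def C_def by (simp add: norm_mult)
  qed
  have "(\<integral>\<xi>. FTb u \<xi> * C \<xi> \<partial>lborel) = (\<integral>\<xi>. (\<integral>y. f \<xi> y \<partial>lborel) \<partial>lborel)"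
    unfolding FTb_def f_def by simp
  also have "\<dots> = (\<integral>y. (\<integral>\<xi>. f \<xi> y \<partial>lborel) \<partial>lborel)"
    by (rule lborel_pair.Fubini_integral[OF fint, symmetric])
  also have "\<dots> = (\<integral>y. complex_of_real (u y * gK s (y - x)) \<partial>lborel)"
  proof (rule Bochner_Integration.integral_cong[OF refl])
    fix y :: 'a
    have "(\<lambda>\<xi>. f \<xi> y) = (\<lambda>\<xi>. complex_of_real (u y) *
        (complex_of_real (exp (- pi * s * (norm \<xi>)^2)) * cis (- 2 * pi * ((y - x) \<bullet> \<xi>))))"
    proof (rule ext)
      fix \<xi>
      have "cis (- 2 * pi * (y \<bullet> \<xi>)) * cis (2 * pi * (x \<bullet> \<xi>)) = cis (- 2 * pi * ((y - x) \<bullet> \<xi>))"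
        by (simp add: cis_mult inner_diff_left algebra_simps)
      moreover have "f \<xi> y = complex_of_real (u y) *
        (complex_of_real (exp (- pi * s * (norm \<xi>)^2)) * (cis (- 2 * pi * (y \<bullet> \<xi>)) * cis (2 * pi * (x \<bullet> \<xi>))))"
        unfolding f_def C_def by (simp only: mult_ac split)
      ultimately show "f \<xi> y = complex_of_real (u y) *
        (complex_of_real (exp (- pi * s * (norm \<xi>)^2)) * cis (- 2 * pi * ((y - x) \<bullet> \<xi>)))"
        by simp
    qed
    then show "(\<integral>\<xi>. f \<xi> y \<partial>lborel) = complex_of_real (u y * gK s (y - x))"
      using gauss_nd(2)[OF s, of "y - x"] by (simp add: gK_def)
  qed
  also have "\<dots> = complex_of_real (\<integral>y. u y * gK s (y - x) \<partial>lborel)"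
    by (rule integral_complex_of_real)
  finally show ?thesis unfolding C_def .
qed


lemma gK_tail1:
  assumes s: "s > 0" and z: "norm z \<ge> \<delta>" and d: "\<delta> \<ge> 0"
  shows "gK s (z::'a::euclidean_space) \<le> (1 / sqrt s) ^ DIM('a) * exp (- pi * \<delta>^2 / s)"
proof -
  have "\<delta>^2 \<le> (norm z)^2" using z d by (simp add: power_mono)
  then have "- pi * (norm z)^2 / s \<le> - pi * \<delta>^2 / s" using s by (simp add: divide_right_mono)
  then show ?thesis unfolding gK_def using s by (intro mult_left_mono) auto
qed

lemma gK_tail2:
  assumes s: "s > 0" and z: "norm z \<ge> \<delta>" and d: "\<delta> \<ge> 0"
  shows "gK s (z::'a::euclidean_space) \<le> sqrt 2 ^ DIM('a) * exp (- pi * \<delta>^2 / (2 * s)) * gK (2 * s) z"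
proof -
  have "\<delta>^2 \<le> (norm z)^2" using z d by (simp add: power_mono)
  then have "- pi * (norm z)^2 / (2 * s) \<le> - pi * \<delta>^2 / (2 * s)" using s by (simp add: divide_right_mono)
  then have e1: "exp (- pi * (norm z)^2 / s) \<le> exp (- pi * \<delta>^2 / (2 * s)) * exp (- pi * (norm z)^2 / (2 * s))"
    by (simp add: exp_add[symmetric] field_simps)
  have e2: "sqrt 2 ^ DIM('a) * (1 / sqrt (2 * s)) ^ DIM('a) = (1 / sqrt s) ^ DIM('a)"
    using s by (simp add: power_mult_distrib[symmetric] real_sqrt_mult)
  have "gK s z = (1 / sqrt s) ^ DIM('a) * exp (- pi * (norm z)^2 / s)" by (simp add: gK_def)
  also have "\<dots> \<le> (1 / sqrt s) ^ DIM('a) * (exp (- pi * \<delta>^2 / (2 * s)) * exp (- pi * (norm z)^2 / (2 * s)))"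
    using s by (intro mult_left_mono e1) simp
  also have "\<dots> = sqrt 2 ^ DIM('a) * exp (- pi * \<delta>^2 / (2 * s)) * gK (2 * s) z"
    unfolding gK_def e2[symmetric] by (simp add: mult_ac)
  finally show ?thesis .
qed

lemma approx_bound:
  fixes u :: "'a::euclidean_space \<Rightarrow> real"
  assumes um[measurable]: "u \<in> borel_measurable borel" and ui: "integrable lborel u" and s: "s > 0"
    and d: "\<delta> > 0" and e: "\<epsilon> > 0" and cont: "\<And>y. dist y x < \<delta> \<Longrightarrow> \<bar>u y - u x\<bar> < \<epsilon>"
  shows "\<bar>(\<integral>y. u y * gK s (y - x) \<partial>lborel) - u x\<bar> \<le>
     \<epsilon> + (1 / sqrt s) ^ DIM('a) * exp (- pi * \<delta>^2 / s) * (\<integral>y. \<bar>u y\<bar> \<partial>lborel)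
       + \<bar>u x\<bar> * (sqrt 2 ^ DIM('a) * exp (- pi * \<delta>^2 / (2 * s)))"
proof -
  define M where "M = (1 / sqrt s) ^ DIM('a) * exp (- pi * \<delta>^2 / s)"
  define E where "E = sqrt 2 ^ DIM('a) * exp (- pi * \<delta>^2 / (2 * s))"
  have s2: "2 * s > 0" using s by simp
  note K1 = gK_shift_int[OF s, of x] and K2 = gK_shift_int[OF s2, of x]
  have Kb: "gK s (y - x) \<le> (1 / sqrt s) ^ DIM('a)" for y
    unfolding gK_def using s by (intro mult_left_le) auto
  have i1: "integrable lborel (\<lambda>y. u y * gK s (y - x))"
  proof (rule Bochner_Integration.integrable_bound[of _ "\<lambda>y. (1 / sqrt s) ^ DIM('a) * u y"])
    show "integrable lborel (\<lambda>y. (1 / sqrt s) ^ DIM('a) * u y)" using ui by simp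
    show "(\<lambda>y. u y * gK s (y - x)) \<in> borel_measurable lborel" by measurable
    show "AE y in lborel. norm (u y * gK s (y - x)) \<le> norm ((1 / sqrt s) ^ DIM('a) * u y)"
    proof (intro AE_I2)
      fix y
      have "\<bar>gK s (y - x)\<bar> \<le> \<bar>(1 / sqrt s) ^ DIM('a)\<bar>"
        using Kb[of y] gK_nonneg[OF s, of "y - x"] by simp
      then show "norm (u y * gK s (y - x)) \<le> norm ((1 / sqrt s) ^ DIM('a) * u y)"
        by (simp add: abs_mult mult.commute mult_left_mono)
    qed
  qed
  have i2: "integrable lborel (\<lambda>y. u x * gK s (y - x))" using K1 by simp
  have "(\<integral>y. u y * gK s (y - x) \<partial>lborel) - u x = (\<integral>y. u y * gK s (y - x) \<partial>lborel) - (\<integral>y. u x * gK s (y - x) \<partial>lborel)"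
    using K1 by simp
  also have "\<dots> = (\<integral>y. (u y - u x) * gK s (y - x) \<partial>lborel)"
    using i1 i2 by (simp add: left_diff_distrib)
  finally have eq: "(\<integral>y. u y * gK s (y - x) \<partial>lborel) - u x = (\<integral>y. (u y - u x) * gK s (y - x) \<partial>lborel)" .
  define R where "R = (\<lambda>y. \<epsilon> * gK s (y - x) + M * \<bar>u y\<bar> + \<bar>u x\<bar> * E * gK (2 * s) (y - x))"
  have iR: "integrable lborel R" unfolding R_def using K1 K2 ui by simp
  have iL: "integrable lborel (\<lambda>y. (u y - u x) * gK s (y - x))"
    using i1 i2 by (simp add: left_diff_distrib)
  have pw: "\<bar>(u y - u x) * gK s (y - x)\<bar> \<le> R y" for y
  proof -
    have g0: "gK s (y - x) \<ge> 0" "gK (2 * s) (y - x) \<ge> 0" using gK_nonneg[OF s] gK_nonneg[OF s2] by auto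
    have M0: "M \<ge> 0" "E \<ge> 0" unfolding M_def E_def using s by auto
    have nn: "M * \<bar>u y\<bar> \<ge> 0" "\<bar>u x\<bar> * E * gK (2 * s) (y - x) \<ge> 0" "\<epsilon> * gK s (y - x) \<ge> 0"
      using M0 g0 e by auto
    have lhs: "\<bar>(u y - u x) * gK s (y - x)\<bar> = \<bar>u y - u x\<bar> * gK s (y - x)"
      using g0 by (simp add: abs_mult)
    show ?thesis
    proof (cases "dist y x < \<delta>")
      case True
      then have "\<bar>u y - u x\<bar> * gK s (y - x) \<le> \<epsilon> * gK s (y - x)"
        using cont[OF True] g0 by (intro mult_right_mono) auto
      then show ?thesis unfolding lhs R_def using nn by linarith
    next
      case False
      then have n: "norm (y - x) \<ge> \<delta>" by (simp add: dist_norm)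
      have t1: "gK s (y - x) \<le> M" unfolding M_def using gK_tail1[OF s n] d by simp
      have t2: "gK s (y - x) \<le> E * gK (2 * s) (y - x)" unfolding E_def using gK_tail2[OF s n] d by simp
      have "\<bar>u y - u x\<bar> * gK s (y - x) \<le> \<bar>u y\<bar> * gK s (y - x) + \<bar>u x\<bar> * gK s (y - x)"
        using g0 by (simp add: distrib_right[symmetric] mult_right_mono abs_triangle_ineq4)
      also have "\<dots> \<le> \<bar>u y\<bar> * M + \<bar>u x\<bar> * (E * gK (2 * s) (y - x))"
        using t1 t2 by (intro add_mono mult_left_mono) auto
      finally show ?thesis unfolding lhs R_def using nn by (simp add: mult_ac)
    qed
  qed
  have "\<bar>(\<integral>y. u y * gK s (y - x) \<partial>lborel) - u x\<bar> \<le> integral\<^sup>L lborel R"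
    unfolding eq by (rule integral_abs_bound_integral[OF iL iR pw])
  also have "integral\<^sup>L lborel R = \<epsilon> + M * (\<integral>y. \<bar>u y\<bar> \<partial>lborel) + \<bar>u x\<bar> * E"
    unfolding R_def using K1 K2 ui by simp
  finally show ?thesis unfolding M_def E_def by simp
qed


lemma sqrt_le_self_ge1: "(1::real) \<le> x \<Longrightarrow> sqrt x \<le> x"
proof -
  assume x: "1 \<le> x"
  then have s1: "1 \<le> sqrt x" by simp
  have "sqrt x = sqrt x * 1" by simp
  also have "\<dots> \<le> sqrt x * sqrt x" using s1 by (intro mult_left_mono) auto
  also have "\<dots> = x" using x by simp
  finally show ?thesis .
qed

lemma seq_exp_poly:
  fixes c :: real assumes c: "c > 0"
  shows "(\<lambda>n. sqrt (real (Suc n)) ^ d * exp (- c * real (Suc n))) \<longlonglongrightarrow> 0"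
proof (rule Lim_null_comparison)
  have B: "filterlim (\<lambda>n. c * real (Suc n)) at_top sequentially"
  proof (rule filterlim_tendsto_pos_mult_at_top[OF tendsto_const c])
    show "filterlim (\<lambda>n. real (Suc n)) at_top sequentially"
      using filterlim_real_sequentially by (subst filterlim_sequentially_Suc)
  qed
  have A: "(\<lambda>n. (c * real (Suc n)) ^ d / exp (c * real (Suc n))) \<longlonglongrightarrow> 0"
    by (rule filterlim_compose[OF tendsto_power_div_exp_0 B])
  show "(\<lambda>n. (1 / c) ^ d * ((c * real (Suc n)) ^ d / exp (c * real (Suc n)))) \<longlonglongrightarrow> 0"
    using tendsto_mult_right_zero[OF A] by simp
  show "\<forall>\<^sub>F n in sequentially. norm (sqrt (real (Suc n)) ^ d * exp (- c * real (Suc n)))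
      \<le> (1 / c) ^ d * ((c * real (Suc n)) ^ d / exp (c * real (Suc n)))"
  proof (intro always_eventually allI)
    fix n
    have "sqrt (real (Suc n)) ^ d \<le> real (Suc n) ^ d"
      by (intro power_mono sqrt_le_self_ge1) auto
    then have "sqrt (real (Suc n)) ^ d * exp (- c * real (Suc n)) \<le> real (Suc n) ^ d * exp (- c * real (Suc n))"
      by (intro mult_right_mono) auto
    also have "\<dots> = (1 / c) ^ d * ((c * real (Suc n)) ^ d / exp (c * real (Suc n)))"
    proof -
      have p: "(1 / c) ^ d * (c * real (Suc n)) ^ d = real (Suc n) ^ d"
        using c by (simp add: power_mult_distrib[symmetric])
      have "(1 / c) ^ d * ((c * real (Suc n)) ^ d / exp (c * real (Suc n))) = real (Suc n) ^ d / exp (c * real (Suc n))"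
        using p by (simp add: divide_inverse mult.assoc[symmetric])
      also have "\<dots> = real (Suc n) ^ d * exp (- c * real (Suc n))"
        by (simp add: exp_minus divide_inverse)
      finally show ?thesis ..
    qed
    finally show "norm (sqrt (real (Suc n)) ^ d * exp (- c * real (Suc n)))
      \<le> (1 / c) ^ d * ((c * real (Suc n)) ^ d / exp (c * real (Suc n)))" by simp
  qed
qed

lemma approx_identity:
  fixes u :: "'a::euclidean_space \<Rightarrow> real"
  assumes cont: "continuous_on UNIV u" and ui: "integrable lborel u"
  shows "(\<lambda>n. \<integral>y. u y * gK (1 / real (Suc n)) (y - x) \<partial>lborel) \<longlonglongrightarrow> u x"
proof (rule LIMSEQ_I)
  fix r :: real assume r: "r > 0"
  have um[measurable]: "u \<in> borel_measurable borel" using cont by (rule borel_measurable_continuous_onI)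
  define \<epsilon> where "\<epsilon> = r / 2"
  have e: "\<epsilon> > 0" using r by (simp add: \<epsilon>_def)
  obtain \<delta> where d: "\<delta> > 0" and dd: "\<And>y. dist y x < \<delta> \<Longrightarrow> dist (u y) (u x) < \<epsilon>"
    using cont e unfolding continuous_on_iff by blast
  have cont': "\<bar>u y - u x\<bar> < \<epsilon>" if "dist y x < \<delta>" for y using dd[OF that] by (simp add: dist_real_def)
  define I where "I = (\<integral>y. \<bar>u y\<bar> \<partial>lborel)"
  define t1 where "t1 = (\<lambda>n. sqrt (real (Suc n)) ^ DIM('a) * exp (- (pi * \<delta>^2) * real (Suc n)))"
  define t2 where "t2 = (\<lambda>n. sqrt (real (Suc n)) ^ 0 * exp (- (pi * \<delta>^2 / 2) * real (Suc n)))"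
  have l1: "t1 \<longlonglongrightarrow> 0" unfolding t1_def by (rule seq_exp_poly) (use d in simp)
  have l2: "t2 \<longlonglongrightarrow> 0" unfolding t2_def by (rule seq_exp_poly) (use d in simp)
  have "(\<lambda>n. t1 n * I + \<bar>u x\<bar> * (sqrt 2 ^ DIM('a) * t2 n)) \<longlonglongrightarrow> 0 * I + \<bar>u x\<bar> * (sqrt 2 ^ DIM('a) * 0)"
    by (intro tendsto_intros l1 l2)
  then have "eventually (\<lambda>n. t1 n * I + \<bar>u x\<bar> * (sqrt 2 ^ DIM('a) * t2 n) < \<epsilon>) sequentially"
    using e by (intro order_tendstoD(2)) auto
  then obtain N where N: "\<And>n. n \<ge> N \<Longrightarrow> t1 n * I + \<bar>u x\<bar> * (sqrt 2 ^ DIM('a) * t2 n) < \<epsilon>"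
    unfolding eventually_sequentially by blast
  show "\<exists>no. \<forall>n\<ge>no. norm ((\<integral>y. u y * gK (1 / real (Suc n)) (y - x) \<partial>lborel) - u x) < r"
  proof (intro exI allI impI)
    fix n assume n: "n \<ge> N"
    define s where "s = 1 / real (Suc n)"
    have s: "s > 0" by (simp add: s_def)
    have b: "\<bar>(\<integral>y. u y * gK s (y - x) \<partial>lborel) - u x\<bar> \<le>
     \<epsilon> + (1 / sqrt s) ^ DIM('a) * exp (- pi * \<delta>^2 / s) * I
       + \<bar>u x\<bar> * (sqrt 2 ^ DIM('a) * exp (- pi * \<delta>^2 / (2 * s)))"
      unfolding I_def by (rule approx_bound[OF um ui s d e cont'])
    have "(1 / sqrt s) ^ DIM('a) * exp (- pi * \<delta>^2 / s) = t1 n"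
      unfolding t1_def s_def by (simp add: real_sqrt_divide)
    moreover have "exp (- pi * \<delta>^2 / (2 * s)) = t2 n"
      unfolding t2_def s_def by (simp add: field_simps)
    ultimately have "\<bar>(\<integral>y. u y * gK s (y - x) \<partial>lborel) - u x\<bar> \<le> \<epsilon> + (t1 n * I + \<bar>u x\<bar> * (sqrt 2 ^ DIM('a) * t2 n))"
      using b by simp
    also have "\<dots> < r" using N[OF n] by (simp add: \<epsilon>_def)
    finally show "norm ((\<integral>y. u y * gK (1 / real (Suc n)) (y - x) \<partial>lborel) - u x) < r"
      by (simp add: s_def)
  qed
qed

theorem fourier_inversion:
  fixes u :: "'a::euclidean_space \<Rightarrow> real"
  assumes cont: "continuous_on UNIV u" and ui: "integrable lborel u" and Fi: "integrable lborel (FTb u)"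
  shows "complex_of_real (u x) = (\<integral>\<xi>. FTb u \<xi> * cis (2 * pi * (x \<bullet> \<xi>)) \<partial>lborel)"
proof (rule LIMSEQ_unique)
  have um[measurable]: "u \<in> borel_measurable borel" using cont by (rule borel_measurable_continuous_onI)
  have Fm[measurable]: "FTb u \<in> borel_measurable borel" using Fi by (simp add: borel_measurable_integrable)
  define L where "L = (\<lambda>n. \<integral>\<xi>. FTb u \<xi> * (complex_of_real (exp (- pi * (1 / real (Suc n)) * (norm \<xi>)^2)) * cis (2 * pi * (x \<bullet> \<xi>))) \<partial>lborel)"
  have "L = (\<lambda>n. complex_of_real (\<integral>y. u y * gK (1 / real (Suc n)) (y - x) \<partial>lborel))"
    unfolding L_def by (intro ext gauss_smoothing[OF um ui]) simp
  then show "L \<longlonglongrightarrow> complex_of_real (u x)"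
    using approx_identity[OF cont ui, of x] by (simp add: tendsto_of_real)
  show "L \<longlonglongrightarrow> (\<integral>\<xi>. FTb u \<xi> * cis (2 * pi * (x \<bullet> \<xi>)) \<partial>lborel)"
    unfolding L_def
  proof (rule integral_dominated_convergence[where w="\<lambda>\<xi>. norm (FTb u \<xi>)"])
    show "(\<lambda>\<xi>. FTb u \<xi> * cis (2 * pi * (x \<bullet> \<xi>))) \<in> borel_measurable lborel" by measurable
    show "(\<lambda>\<xi>. FTb u \<xi> * (complex_of_real (exp (- pi * (1 / real (Suc n)) * (norm \<xi>)^2)) * cis (2 * pi * (x \<bullet> \<xi>)))) \<in> borel_measurable lborel" for n
      by measurable
    show "integrable lborel (\<lambda>\<xi>. norm (FTb u \<xi>))" using Fi by simp
    show "AE \<xi> in lborel. (\<lambda>n. FTb u \<xi> * (complex_of_real (exp (- pi * (1 / real (Suc n)) * (norm \<xi>)^2)) * cis (2 * pi * (x \<bullet> \<xi>)))) \<longlonglongrightarrow> FTb u \<xi> * cis (2 * pi * (x \<bullet> \<xi>))"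
    proof (intro AE_I2)
      fix \<xi> :: 'a
      have lim0: "(\<lambda>n. 1 / real (Suc n)) \<longlonglongrightarrow> 0" by (rule LIMSEQ_Suc[OF lim_1_over_n])
      have limE: "(\<lambda>n. exp (- pi * (1 / real (Suc n)) * (norm \<xi>)^2)) \<longlonglongrightarrow> exp (- pi * 0 * (norm \<xi>)^2)"
        by (intro tendsto_intros lim0)
      have "(\<lambda>n. FTb u \<xi> * (complex_of_real (exp (- pi * (1 / real (Suc n)) * (norm \<xi>)^2)) * cis (2 * pi * (x \<bullet> \<xi>)))) \<longlonglongrightarrow> FTb u \<xi> * (complex_of_real (exp (- pi * 0 * (norm \<xi>)^2)) * cis (2 * pi * (x \<bullet> \<xi>)))"
        by (intro tendsto_intros limE)
      then show "(\<lambda>n. FTb u \<xi> * (complex_of_real (exp (- pi * (1 / real (Suc n)) * (norm \<xi>)^2)) * cis (2 * pi * (x \<bullet> \<xi>)))) \<longlonglongrightarrow> FTb u \<xi> * cis (2 * pi * (x \<bullet> \<xi>))"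
        by simp
    qed
    show "AE \<xi> in lborel. norm (FTb u \<xi> * (complex_of_real (exp (- pi * (1 / real (Suc n)) * (norm \<xi>)^2)) * cis (2 * pi * (x \<bullet> \<xi>)))) \<le> norm (FTb u \<xi>)" for n
    proof (intro AE_I2)
      fix \<xi> :: 'a
      have "exp (- pi * (1 / real (Suc n)) * (norm \<xi>)^2) \<le> 1" by simp
      then show "norm (FTb u \<xi> * (complex_of_real (exp (- pi * (1 / real (Suc n)) * (norm \<xi>)^2)) * cis (2 * pi * (x \<bullet> \<xi>)))) \<le> norm (FTb u \<xi>)"
        by (simp add: norm_mult mult_left_le)
    qed
  qed
qed


lemma reflect_AE:
  fixes x :: "'a::euclidean_space"
  assumes "AE z in lborel. P z"
  shows "AE y in lborel. P (x - y)"
proof -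
  obtain N where N: "N \<in> null_sets lborel" "{z \<in> space lborel. \<not> P z} \<subseteq> N"
    using assms unfolding eventually_ae_filter by auto
  have Nm: "N \<in> sets borel" using N(1) by (simp add: null_sets_def)
  have m: "(\<lambda>y. x - y) \<in> borel_measurable (borel :: 'a measure)" by measurable
  have "emeasure lborel ((\<lambda>y. x - y) -` N) = emeasure (distr lborel borel (\<lambda>y. x - y)) N"
    using Nm by (subst emeasure_distr) auto
  also have "\<dots> = 0" using N(1) by (simp add: lborel_distr_reflect null_setsD1)
  moreover have "(\<lambda>y. x - y) -` N \<in> sets borel" using measurable_sets_borel[OF m Nm] .
  ultimately have "(\<lambda>y. x - y) -` N \<in> null_sets lborel"
    by (auto simp: null_sets_def)
  then show ?thesis
    by (rule AE_I') (use N(2) in auto)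
qed

lemma FTb_measurable[measurable]:
  assumes [measurable]: "u \<in> borel_measurable borel"
  shows "FTb u \<in> borel_measurable borel"
  unfolding FTb_def by measurable

lemma FTb_bound:
  assumes "integrable lborel u"
  shows "norm (FTb u \<xi>) \<le> (\<integral>x. \<bar>u x\<bar> \<partial>lborel)"
proof -
  have "norm (FTb u \<xi>) \<le> (\<integral>x. norm (complex_of_real (u x) * cis (- 2 * pi * (x \<bullet> \<xi>))) \<partial>lborel)"
    unfolding FTb_def by (rule integral_norm_bound)
  also have "\<dots> = (\<integral>x. \<bar>u x\<bar> \<partial>lborel)" by (simp add: norm_mult)
  finally show ?thesis .
qed

lemma FTb_cnj:
  "cnj (FTb u \<xi>) = (\<integral>x. complex_of_real (u x) * cis (2 * pi * (x \<bullet> \<xi>)) \<partial>lborel)"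
proof -
  have "cnj (FTb u \<xi>) = (\<integral>x. cnj (complex_of_real (u x) * cis (- 2 * pi * (x \<bullet> \<xi>))) \<partial>lborel)"
    unfolding FTb_def by (simp only: Bochner_Integration.integral_cnj)
  also have "\<dots> = (\<integral>x. complex_of_real (u x) * cis (2 * pi * (x \<bullet> \<xi>)) \<partial>lborel)"
    by (simp add: cis_cnj)
  finally show ?thesis .
qed

lemma plancherel_gen:
  fixes u :: "'a::euclidean_space \<Rightarrow> real"
  assumes um[measurable]: "u \<in> borel_measurable borel" and ui: "integrable lborel u"
    and ub: "\<And>y. \<bar>u y\<bar> \<le> M"
    and Gi: "integrable lborel G"
    and inv: "\<And>y. complex_of_real (u y) = (\<integral>\<xi>. G \<xi> * cis (2 * pi * (y \<bullet> \<xi>)) \<partial>lborel)"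
  shows "complex_of_real (\<integral>y. u y * u y \<partial>lborel) = (\<integral>\<xi>. G \<xi> * cnj (FTb u \<xi>) \<partial>lborel)"
proof -
  have Gm[measurable]: "G \<in> borel_measurable borel" using Gi by (simp add: borel_measurable_integrable)
  define h where "h = (\<lambda>(y::'a) (\<xi>::'a). complex_of_real (u y) * (G \<xi> * cis (2 * pi * (y \<bullet> \<xi>))))"
  have hint: "integrable (lborel \<Otimes>\<^sub>M lborel) (case_prod h)"
  proof (rule integrable_pair_bound)
    show "case_prod h \<in> borel_measurable (lborel \<Otimes>\<^sub>M lborel)" unfolding h_def by measurable
    show "integrable lborel (\<lambda>y. \<bar>u y\<bar>)" using ui by simp
    show "integrable lborel (\<lambda>\<xi>. norm (G \<xi>))" using Gi by simp
    show "norm (case (y, \<xi>) of (y, \<xi>) \<Rightarrow> h y \<xi>) \<le> \<bar>u y\<bar> * norm (G \<xi>)" for y \<xi>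
      unfolding h_def by (simp add: norm_mult)
  qed
  have "complex_of_real (\<integral>y. u y * u y \<partial>lborel) = (\<integral>y. complex_of_real (u y) * complex_of_real (u y) \<partial>lborel)"
    by (simp only: integral_complex_of_real[symmetric] of_real_mult)
  also have "\<dots> = (\<integral>y. (\<integral>\<xi>. h y \<xi> \<partial>lborel) \<partial>lborel)"
    unfolding h_def by (subst inv) simp
  also have "\<dots> = (\<integral>\<xi>. (\<integral>y. h y \<xi> \<partial>lborel) \<partial>lborel)"
    by (rule lborel_pair.Fubini_integral[OF hint, symmetric])
  also have "\<dots> = (\<integral>\<xi>. G \<xi> * cnj (FTb u \<xi>) \<partial>lborel)"
    unfolding h_def FTb_cnj
    by (intro Bochner_Integration.integral_cong refl) (simp add: mult.left_commute)
  finally show ?thesis .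
qed


definition conv :: "('a::euclidean_space \<Rightarrow> real) \<Rightarrow> ('a \<Rightarrow> real) \<Rightarrow> 'a \<Rightarrow> real" where
  "conv f p x = (\<integral>y. f y * p (x - y) \<partial>lborel)"

lemma translate_form: "(\<lambda>x. p (- y + x)) = (\<lambda>x. p (x - y))" for y :: "'a::euclidean_space"
  by (rule ext, rule arg_cong[where f=p], simp add: algebra_simps)

lemma int_shift:
  fixes p :: "'a::euclidean_space \<Rightarrow> real"
  assumes [measurable]: "p \<in> borel_measurable borel" and pi: "integrable lborel p"
  shows "integrable lborel (\<lambda>x. p (x - y))" "(\<integral>x. p (x - y) \<partial>lborel) = integral\<^sup>L lborel p"
    "integrable lborel (\<lambda>x. p (y - x))" "(\<integral>x. p (y - x) \<partial>lborel) = integral\<^sup>L lborel p"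
  using lborel_integral_translate[of p "-y"] lborel_integral_reflect[of p y] pi
  unfolding translate_form by simp_all

lemma conv_pair_int:
  fixes f p :: "'a::euclidean_space \<Rightarrow> real"
  assumes [measurable]: "f \<in> borel_measurable borel" "p \<in> borel_measurable borel"
    and fi: "integrable lborel f" and pi: "integrable lborel p"
  shows "integrable (lborel \<Otimes>\<^sub>M lborel) (\<lambda>(y, x). f y * p (x - y))"
proof (rule lborel_pair.Fubini_integrable)
  show "(\<lambda>(y, x). f y * p (x - y)) \<in> borel_measurable (lborel \<Otimes>\<^sub>M lborel)" by measurable
  have api: "integrable lborel (\<lambda>x. \<bar>p x\<bar>)" using pi by simp
  have "(\<lambda>y. \<integral>x. norm (case (y, x) of (y, x) \<Rightarrow> f y * p (x - y)) \<partial>lborel) = (\<lambda>y. \<bar>f y\<bar> * (\<integral>x. \<bar>p x\<bar> \<partial>lborel))"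
    using int_shift(2)[of "\<lambda>x. \<bar>p x\<bar>"] api by (simp add: abs_mult)
  moreover have "integrable lborel (\<lambda>y. \<bar>f y\<bar> * (\<integral>x. \<bar>p x\<bar> \<partial>lborel))" using fi by simp
  ultimately show "integrable lborel (\<lambda>y. \<integral>x. norm (case (y, x) of (y, x) \<Rightarrow> f y * p (x - y)) \<partial>lborel)" by simp
  show "AE y in lborel. integrable lborel (\<lambda>x. case (y, x) of (y, x) \<Rightarrow> f y * p (x - y))"
    using int_shift(1)[OF _ pi] by simp
qed

lemma conv_int:
  fixes f p :: "'a::euclidean_space \<Rightarrow> real"
  assumes [measurable]: "f \<in> borel_measurable borel" "p \<in> borel_measurable borel"
    and fi: "integrable lborel f" and pi: "integrable lborel p"
  shows "integrable lborel (conv f p)"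
proof -
  have "integrable lborel (\<lambda>x. \<integral>y. f y * p (x - y) \<partial>lborel)"
    using lborel_pair.integrable_snd[OF conv_pair_int[OF assms]] by simp
  then show ?thesis unfolding conv_def[abs_def] .
qed

lemma abs_mult_bound_aux: "\<bar>q\<bar> \<le> a \<Longrightarrow> \<bar>t\<bar> * \<bar>q\<bar> \<le> a * \<bar>t::real\<bar>"
  by (metis abs_ge_zero mult.commute mult_left_mono)

lemma conv_bound:
  fixes f p :: "'a::euclidean_space \<Rightarrow> real"
  assumes [measurable]: "f \<in> borel_measurable borel" "p \<in> borel_measurable borel"
    and fi: "integrable lborel f" and pb: "AE z in lborel. \<bar>p z\<bar> \<le> a"
  shows "\<bar>conv f p x\<bar> \<le> a * (\<integral>y. \<bar>f y\<bar> \<partial>lborel)"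
proof -
  have pb': "AE y in lborel. \<bar>p (x - y)\<bar> \<le> a" by (rule reflect_AE[OF pb])
  have i1: "integrable lborel (\<lambda>y. f y * p (x - y))"
  proof (rule Bochner_Integration.integrable_bound[of _ "\<lambda>y. a * f y"])
    show "integrable lborel (\<lambda>y. a * f y)" using fi by simp
    show "(\<lambda>y. f y * p (x - y)) \<in> borel_measurable lborel" by measurable
    show "AE y in lborel. norm (f y * p (x - y)) \<le> norm (a * f y)"
      using pb' by eventually_elim (simp add: abs_mult abs_mult_bound_aux)
  qed
  have "\<bar>conv f p x\<bar> \<le> (\<integral>y. \<bar>f y * p (x - y)\<bar> \<partial>lborel)"
    unfolding conv_def using integral_norm_bound[of lborel "\<lambda>y. f y * p (x - y)"] by simp
  also have "\<dots> \<le> (\<integral>y. a * \<bar>f y\<bar> \<partial>lborel)"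
  proof (rule integral_mono_AE)
    show "integrable lborel (\<lambda>y. \<bar>f y * p (x - y)\<bar>)" using i1 by (rule integrable_abs)
    show "integrable lborel (\<lambda>y. a * \<bar>f y\<bar>)" using fi by simp
    show "AE y in lborel. \<bar>f y * p (x - y)\<bar> \<le> a * \<bar>f y\<bar>"
      using pb' by eventually_elim (simp add: abs_mult abs_mult_bound_aux)
  qed
  also have "\<dots> = a * (\<integral>y. \<bar>f y\<bar> \<partial>lborel)" by simp
  finally show ?thesis .
qed

lemma conv_FT:
  fixes f p :: "'a::euclidean_space \<Rightarrow> real"
  assumes [measurable]: "f \<in> borel_measurable borel" "p \<in> borel_measurable borel"
    and fi: "integrable lborel f" and pi: "integrable lborel p"
  shows "FTb (conv f p) \<xi> = FTb f \<xi> * FTb p \<xi>"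
proof -
  define H where "H = (\<lambda>(y::'a) (x::'a). complex_of_real (f y) * complex_of_real (p (x - y)) * cis (- 2 * pi * (x \<bullet> \<xi>)))"
  have Hint: "integrable (lborel \<Otimes>\<^sub>M lborel) (case_prod H)"
  proof (rule Bochner_Integration.integrable_bound[OF conv_pair_int[OF assms]])
    show "case_prod H \<in> borel_measurable (lborel \<Otimes>\<^sub>M lborel)" unfolding H_def by measurable
    show "AE z in lborel \<Otimes>\<^sub>M lborel. norm (case_prod H z) \<le> norm (case z of (y, x) \<Rightarrow> f y * p (x - y))"
    proof (intro AE_I2)
      fix z :: "'a \<times> 'a"
      obtain y x where z: "z = (y, x)" by (cases z)
      show "norm (case_prod H z) \<le> norm (case z of (y, x) \<Rightarrow> f y * p (x - y))"
        unfolding z H_def by (simp add: norm_mult abs_mult)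
    qed
  qed
  have "FTb (conv f p) \<xi> = (\<integral>x. (\<integral>y. H y x \<partial>lborel) \<partial>lborel)"
    unfolding FTb_def conv_def H_def integral_complex_of_real[symmetric]
    by (simp only: of_real_mult integral_mult_left_zero)
  also have "\<dots> = (\<integral>y. (\<integral>x. H y x \<partial>lborel) \<partial>lborel)"
    by (rule lborel_pair.Fubini_integral[OF Hint])
  also have "\<dots> = (\<integral>y. complex_of_real (f y) * cis (- 2 * pi * (y \<bullet> \<xi>)) * FTb p \<xi> \<partial>lborel)"
  proof (intro Bochner_Integration.integral_cong refl)
    fix y :: 'a
    define h where "h = (\<lambda>x. complex_of_real (p (x - y)) * cis (- 2 * pi * (x \<bullet> \<xi>)))"
    have hm[measurable]: "h \<in> borel_measurable borel" unfolding h_def by measurable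
    have "(\<integral>x. H y x \<partial>lborel) = complex_of_real (f y) * integral\<^sup>L lborel h"
      unfolding H_def h_def by (simp add: mult.assoc)
    also have "integral\<^sup>L lborel h = (\<integral>z. h (y + z) \<partial>lborel)"
      by (rule lborel_integral_translate(1)[OF hm, symmetric])
    also have "\<dots> = cis (- 2 * pi * (y \<bullet> \<xi>)) * FTb p \<xi>"
    proof -
      have "h (y + z) = cis (- 2 * pi * (y \<bullet> \<xi>)) * (complex_of_real (p z) * cis (- 2 * pi * (z \<bullet> \<xi>)))" for z
      proof -
        have "cis (- 2 * pi * ((y + z) \<bullet> \<xi>)) = cis (- 2 * pi * (y \<bullet> \<xi>)) * cis (- 2 * pi * (z \<bullet> \<xi>))"
          by (simp add: inner_add_left cis_mult distrib_left)
        then show ?thesis unfolding h_def by (simp add: mult_ac)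
      qed
      then show ?thesis unfolding FTb_def by simp
    qed
    finally show "(\<integral>x. H y x \<partial>lborel) = complex_of_real (f y) * cis (- 2 * pi * (y \<bullet> \<xi>)) * FTb p \<xi>"
      by (simp add: mult.assoc)
  qed
  also have "\<dots> = FTb f \<xi> * FTb p \<xi>" unfolding FTb_def by simp
  finally show ?thesis .
qed

lemma conv_inv:
  fixes f p :: "'a::euclidean_space \<Rightarrow> real" and F :: "'a \<Rightarrow> complex"
  assumes [measurable]: "f \<in> borel_measurable borel" "p \<in> borel_measurable borel"
    and pi: "integrable lborel p" and Fi: "integrable lborel F"
    and inv: "\<And>y. complex_of_real (f y) = (\<integral>\<xi>. F \<xi> * cis (2 * pi * (y \<bullet> \<xi>)) \<partial>lborel)"
  shows "complex_of_real (conv f p x) = (\<integral>\<xi>. F \<xi> * FTb p \<xi> * cis (2 * pi * (x \<bullet> \<xi>)) \<partial>lborel)"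
proof -
  have Fm[measurable]: "F \<in> borel_measurable borel" using Fi by (simp add: borel_measurable_integrable)
  define H where "H = (\<lambda>(\<xi>::'a) (y::'a). F \<xi> * cis (2 * pi * (y \<bullet> \<xi>)) * complex_of_real (p (x - y)))"
  have Hint: "integrable (lborel \<Otimes>\<^sub>M lborel) (case_prod H)"
  proof (rule integrable_pair_bound)
    show "case_prod H \<in> borel_measurable (lborel \<Otimes>\<^sub>M lborel)" unfolding H_def by measurable
    show "integrable lborel (\<lambda>\<xi>. norm (F \<xi>))" using Fi by simp
    show "integrable lborel (\<lambda>y. \<bar>p (x - y)\<bar>)" using int_shift(3)[of "\<lambda>z. \<bar>p z\<bar>"] pi by simp
    show "norm (case (\<xi>, y) of (\<xi>, y) \<Rightarrow> H \<xi> y) \<le> norm (F \<xi>) * \<bar>p (x - y)\<bar>" for \<xi> y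
      unfolding H_def by (simp add: norm_mult)
  qed
  have "complex_of_real (conv f p x) = (\<integral>y. complex_of_real (f y) * complex_of_real (p (x - y)) \<partial>lborel)"
    unfolding conv_def by (simp only: integral_complex_of_real[symmetric] of_real_mult)
  also have "\<dots> = (\<integral>y. (\<integral>\<xi>. H \<xi> y \<partial>lborel) \<partial>lborel)"
    unfolding H_def by (subst inv) simp
  also have "\<dots> = (\<integral>\<xi>. (\<integral>y. H \<xi> y \<partial>lborel) \<partial>lborel)"
    by (rule lborel_pair.Fubini_integral[OF Hint])
  also have "\<dots> = (\<integral>\<xi>. F \<xi> * FTb p \<xi> * cis (2 * pi * (x \<bullet> \<xi>)) \<partial>lborel)"
  proof (intro Bochner_Integration.integral_cong refl)
    fix \<xi> :: 'a
    define h where "h = (\<lambda>y. cis (2 * pi * (y \<bullet> \<xi>)) * complex_of_real (p (x - y)))"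
    have hm[measurable]: "h \<in> borel_measurable borel" unfolding h_def by measurable
    have "(\<integral>y. H \<xi> y \<partial>lborel) = F \<xi> * integral\<^sup>L lborel h"
      unfolding H_def h_def by (simp add: mult.assoc)
    also have "integral\<^sup>L lborel h = (\<integral>z. h (x - z) \<partial>lborel)"
      by (rule lborel_integral_reflect(1)[OF hm, symmetric])
    also have "\<dots> = cis (2 * pi * (x \<bullet> \<xi>)) * FTb p \<xi>"
    proof -
      have "h (x - z) = cis (2 * pi * (x \<bullet> \<xi>)) * (complex_of_real (p z) * cis (- 2 * pi * (z \<bullet> \<xi>)))" for z
      proof -
        have "cis (2 * pi * ((x - z) \<bullet> \<xi>)) = cis (2 * pi * (x \<bullet> \<xi>)) * cis (- 2 * pi * (z \<bullet> \<xi>))"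
          by (simp add: inner_diff_left cis_mult right_diff_distrib)
        then show ?thesis unfolding h_def by (simp add: mult_ac)
      qed
      then show ?thesis unfolding FTb_def by simp
    qed
    finally show "(\<integral>y. H \<xi> y \<partial>lborel) = F \<xi> * FTb p \<xi> * cis (2 * pi * (x \<bullet> \<xi>))"
      by (simp add: mult_ac)
  qed
  finally show ?thesis .
qed


lemma key_ineq:
  fixes F G \<alpha> \<beta> Nf Ng a c :: real
  assumes F: "F > 0" and G: "G > 0" and \<alpha>: "\<alpha> \<ge> 0" and \<beta>: "\<beta> \<ge> 0"
    and h1: "F^2 \<le> 4 * \<alpha> * Nf" and h2: "G^2 \<le> 4 * \<beta> * Ng"
    and h3: "Nf \<le> c^2 * Ng" and h4: "0 \<le> Ng" and h5: "Ng \<le> a * F * G"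
  shows "1 \<le> 16 * \<alpha> * \<beta> * a^2 * c^2"
proof -
  have Nf0: "0 \<le> Nf" using h1 F \<alpha> by (smt (verit) mult_nonneg_nonneg zero_less_power mult_le_0_iff)
  have "F^2 * G^2 \<le> (4 * \<alpha> * Nf) * (4 * \<beta> * Ng)"
    using h1 h2 by (intro mult_mono) (use \<beta> h4 \<alpha> Nf0 in auto)
  also have "\<dots> = 16 * \<alpha> * \<beta> * (Nf * Ng)" by (simp add: mult_ac)
  also have "\<dots> \<le> 16 * \<alpha> * \<beta> * (c^2 * Ng * Ng)"
    using h3 h4 \<alpha> \<beta> by (intro mult_left_mono mult_right_mono) auto
  also have "\<dots> = 16 * \<alpha> * \<beta> * c^2 * Ng^2" by (simp add: power2_eq_square mult_ac)
  also have "\<dots> \<le> 16 * \<alpha> * \<beta> * c^2 * (a * F * G)^2"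
    using h4 h5 \<alpha> \<beta> by (intro mult_left_mono power_mono) auto
  also have "\<dots> = (16 * \<alpha> * \<beta> * a^2 * c^2) * (F^2 * G^2)" by (simp add: power_mult_distrib mult_ac)
  finally have "1 * (F^2 * G^2) \<le> (16 * \<alpha> * \<beta> * a^2 * c^2) * (F^2 * G^2)" by simp
  moreover have "F^2 * G^2 > 0" using F G by simp
  ultimately show ?thesis by (rule mult_right_le_imp_le)
qed

lemma cs_amgm:
  fixes X \<alpha> N :: real
  assumes X: "X \<ge> 0" and \<alpha>: "\<alpha> \<ge> 0" and N: "N \<ge> 0"
    and h: "\<And>t. t > 0 \<Longrightarrow> X \<le> (t * N + \<alpha> / t) / 2"
  shows "X^2 \<le> \<alpha> * N"
proof (cases "X = 0")
  case True then show ?thesis using \<alpha> N by simp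
next
  case False
  then have X0: "X > 0" using X by simp
  show ?thesis
  proof (cases "N = 0")
    case True
    have "X \<le> ((\<alpha> + 1) / X * N + \<alpha> / ((\<alpha> + 1) / X)) / 2" using h[of "(\<alpha> + 1) / X"] X0 \<alpha> by simp
    also have "\<dots> = \<alpha> * X / (2 * (\<alpha> + 1))" using True X0 \<alpha> by (simp add: field_simps)
    also have "\<dots> < X"
    proof -
      have n: "0 \<le> X * \<alpha>" using X0 \<alpha> by simp
      have c: "2 * (\<alpha> + 1) > 0" using \<alpha> by simp
      have e: "X * (2 * (\<alpha> + 1)) = 2 * (X * \<alpha>) + 2 * X" by (simp add: algebra_simps)
      have "\<alpha> * X < X * (2 * (\<alpha> + 1))" unfolding e using n X0 by (simp add: mult.commute)
      then show ?thesis using c by (simp add: pos_divide_less_eq)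
    qed
    finally show ?thesis by simp
  next
    case False
    then have N0: "N > 0" using N by simp
    have "X \<le> (X / N * N + \<alpha> / (X / N)) / 2" using h[of "X / N"] X0 N0 by simp
    also have "\<dots> = X / 2 + \<alpha> * N / (2 * X)" using X0 N0 by (simp add: field_simps)
    finally have "X / 2 \<le> \<alpha> * N / (2 * X)" by linarith
    then have "X / 2 * (2 * X) \<le> \<alpha> * N" by (subst (asm) pos_le_divide_eq) (use X0 in auto)
    then show ?thesis by (simp add: power2_eq_square)
  qed
qed

lemma amgm_pointwise:
  fixes t h :: real assumes t: "t > 0"
  shows "\<bar>h\<bar> \<le> (t * h^2 + 1 / t) / 2"
proof -
  have "0 \<le> (t * \<bar>h\<bar> - 1)^2" by simp
  then have "0 \<le> t^2 * h^2 - 2 * t * \<bar>h\<bar> + 1" by (simp add: power2_eq_square algebra_simps)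
  then have a: "\<bar>h\<bar> * (2 * t) \<le> t^2 * h^2 + 1" by (simp add: algebra_simps)
  have b: "(t * h^2 + 1 / t) / 2 = (t^2 * h^2 + 1) / (2 * t)" using t by (simp add: field_simps power2_eq_square)
  show ?thesis unfolding b using t a by (simp add: pos_le_divide_eq)
qed

lemma half_bound:
  fixes h :: "'a::euclidean_space \<Rightarrow> real"
  assumes hm[measurable]: "h \<in> borel_measurable borel" and hi: "integrable lborel h"
    and neg: "integral\<^sup>L lborel h \<le> 0"
  shows "(\<integral>x. \<bar>h x\<bar> \<partial>lborel) \<le> 2 * (\<integral>x. indicator {x. h x < 0} x * \<bar>h x\<bar> \<partial>lborel)"
proof -
  have im: "integrable lborel (\<lambda>x. indicator {x. h x < 0} x * \<bar>h x\<bar>)"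
    by (rule Bochner_Integration.integrable_bound[of _ "\<lambda>x. \<bar>h x\<bar>"]) (use hi in \<open>auto simp: indicator_def\<close>)
  have "\<bar>h x\<bar> = h x + 2 * (indicator {x. h x < 0} x * \<bar>h x\<bar>)" for x
    by (auto simp: indicator_def)
  then have "(\<integral>x. \<bar>h x\<bar> \<partial>lborel) = (\<integral>x. h x + 2 * (indicator {x. h x < 0} x * \<bar>h x\<bar>) \<partial>lborel)"
    by simp
  also have "\<dots> = integral\<^sup>L lborel h + 2 * (\<integral>x. indicator {x. h x < 0} x * \<bar>h x\<bar> \<partial>lborel)"
    using hi im by simp
  finally show ?thesis using neg by simp
qed

lemma cs_part:
  fixes h :: "'a::euclidean_space \<Rightarrow> real"
  assumes hm[measurable]: "h \<in> borel_measurable borel" and hi: "integrable lborel h"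
    and h2i: "integrable lborel (\<lambda>x. h x * h x)"
    and fin: "emeasure lborel {x. h x < 0} < \<infinity>"
  shows "(\<integral>x. indicator {x. h x < 0} x * \<bar>h x\<bar> \<partial>lborel)^2 \<le> measure lborel {x. h x < 0} * (\<integral>x. h x * h x \<partial>lborel)"
proof (rule cs_amgm)
  define A where "A = {x. h x < 0}"
  have Am[measurable]: "A \<in> sets borel" unfolding A_def by measurable
  have Ai: "integrable lborel (indicator A :: 'a \<Rightarrow> real)"
    using fin Am unfolding A_def[symmetric] by (intro integrable_real_indicator) auto
  have im: "integrable lborel (\<lambda>x. indicator A x * \<bar>h x\<bar>)"
    by (rule Bochner_Integration.integrable_bound[of _ "\<lambda>x. \<bar>h x\<bar>"]) (use hi in \<open>auto simp: indicator_def\<close>)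
  show "0 \<le> (\<integral>x. indicator {x. h x < 0} x * \<bar>h x\<bar> \<partial>lborel)" by simp
  show "0 \<le> measure lborel {x. h x < 0}" by simp
  show "0 \<le> (\<integral>x. h x * h x \<partial>lborel)" by simp
  fix t :: real assume t: "t > 0"
  have "(\<integral>x. indicator A x * \<bar>h x\<bar> \<partial>lborel) \<le> (\<integral>x. (t * (h x * h x) + indicator A x / t) / 2 \<partial>lborel)"
  proof (rule integral_mono[OF im])
    show "integrable lborel (\<lambda>x. (t * (h x * h x) + indicator A x / t) / 2)" using h2i Ai by simp
    fix x
    show "indicator A x * \<bar>h x\<bar> \<le> (t * (h x * h x) + indicator A x / t) / 2"
      using amgm_pointwise[OF t, of "h x"] t
      by (auto simp: indicator_def power2_eq_square intro: add_nonneg_nonneg)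
  qed
  also have "\<dots> = (t * (\<integral>x. h x * h x \<partial>lborel) + measure lborel A / t) / 2"
    using h2i Ai Am by simp
  finally show "(\<integral>x. indicator {x. h x < 0} x * \<bar>h x\<bar> \<partial>lborel) \<le> (t * (\<integral>x. h x * h x \<partial>lborel) + measure lborel {x. h x < 0} / t) / 2"
    unfolding A_def .
qed

lemma FTb_zero_if_abs_zero:
  fixes h :: "'a::euclidean_space \<Rightarrow> real"
  assumes hm[measurable]: "h \<in> borel_measurable borel" and hi: "integrable lborel h"
    and z: "(\<integral>x. \<bar>h x\<bar> \<partial>lborel) = 0"
  shows "FTb h \<xi> = 0"
proof -
  have "AE x in lborel. \<bar>h x\<bar> = 0"
    using z hi by (subst (asm) integral_nonneg_eq_0_iff_AE) auto
  then have "AE x in lborel. complex_of_real (h x) * cis (- 2 * pi * (x \<bullet> \<xi>)) = 0"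
    by eventually_elim simp
  then show "FTb h \<xi> = 0"
    unfolding FTb_def by (rule integral_eq_zero_AE)
qed

lemma pos_measure_if_int_pos:
  fixes h :: "'a::euclidean_space \<Rightarrow> real"
  assumes A[measurable]: "A \<in> sets borel"
    and pos: "(\<integral>x. indicator A x * h x \<partial>lborel) > 0"
  shows "emeasure lborel A > 0"
proof (rule ccontr)
  assume "\<not> emeasure lborel A > 0"
  then have "A \<in> null_sets lborel" using A by (simp add: null_sets_def zero_less_iff_neq_zero)
  then have "AE x in lborel. x \<notin> A" by (rule AE_not_in)
  then have "AE x in lborel. indicator A x * h x = 0" by eventually_elim simp
  then have "(\<integral>x. indicator A x * h x \<partial>lborel) = 0"
    by (rule integral_eq_zero_AE)
  then show False using pos by simp
qed


lemma final_numeric: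
  fixes K V r :: real and d :: nat
  assumes d: "d > 0" and K: "K \<ge> 0" and V: "V \<ge> 0" and r: "r > 0"
    and h: "1 / K \<le> V^2 * r^d"
  shows "r \<ge> (K * V^2) powr (- 1 / real d)"
proof (cases "K * V^2 = 0")
  case True
  then have "(K * V^2) powr (- 1 / real d) = 0" using True by simp
  show ?thesis unfolding \<open>(K * V^2) powr (- 1 / real d) = 0\<close> using r by simp
next
  case False
  then have KV: "K * V^2 > 0" using K V by (simp add: less_le)
  then have K0: "K > 0" and V0: "V^2 > 0" using K V by (auto simp: zero_less_mult_iff)
  have "1 / (K * V^2) = (1 / K) / V^2" by simp
  also have "\<dots> \<le> r^d" by (subst pos_divide_le_eq[OF V0]) (metis h mult.commute)
  finally have h2: "1 / (K * V^2) \<le> r^d" .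
  have "(K * V^2) powr (- 1 / real d) = (1 / (K * V^2)) powr (1 / real d)"
    using KV by (simp add: powr_minus_divide powr_divide)
  also have "\<dots> \<le> (r^d) powr (1 / real d)"
    by (rule powr_mono2) (use h2 KV in auto)
  also have "(r^d) powr (1 / real d) = r"
  proof -
    have "(r^d) powr (1 / real d) = (r powr real d) powr (1 / real d)" using r by (simp add: powr_realpow)
    also have "\<dots> = r powr (real d * (1 / real d))" by (rule powr_powr)
    also have "\<dots> = r" using d r by simp
    finally show ?thesis .
  qed
  finally show ?thesis .
qed

lemma const_numeric:
  fixes a b c \<alpha> \<beta> :: real
  assumes a: "a \<ge> 0" and c: "c > 0" and bc: "b * c \<ge> 1" and ab: "\<alpha> * \<beta> \<ge> 0"
    and h: "1 \<le> 16 * \<alpha> * \<beta> * a^2 * c^2"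
  shows "1 / (16 * a^2 * b^2 * c^4) \<le> \<alpha> * \<beta>"
proof (cases "a = 0")
  case True then show ?thesis using ab by simp
next
  case False
  define D where "D = 16 * a^2 * c^2"
  have D: "D > 0" using False a c by (simp add: D_def)
  have "1 \<le> (\<alpha> * \<beta>) * D" using h by (simp add: D_def mult_ac)
  then have h2: "1 / D \<le> \<alpha> * \<beta>" using D by (simp add: pos_divide_le_eq)
  have K: "16 * a^2 * b^2 * c^4 = D * (b * c)^2" unfolding D_def by (simp add: power_mult_distrib mult_ac power2_eq_square numeral_eq_Suc)
  have "(b * c)^2 \<ge> 1" using bc by (simp add: one_le_power)
  then have "D \<le> D * (b * c)^2" using D by simp
  moreover have "0 < D * (b * c)^2 * D" using D \<open>(b * c)^2 \<ge> 1\<close> by (intro mult_pos_pos) auto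
  ultimately have "1 / (D * (b * c)^2) \<le> 1 / D" using D by (intro divide_left_mono) auto
  then show ?thesis unfolding K using h2 by linarith
qed


hide_const (open) Convolution.convolution

lemma lborel_AE_const:
  assumes "AE x in (lborel :: 'a::euclidean_space measure). P"
  shows P
proof (rule ccontr)
  assume "\<not> P"
  then have "AE x in (lborel :: 'a measure). False" using assms by simp
  then have "ae_filter (lborel :: 'a measure) = bot" using trivial_limit_def by blast
  then show False by (simp add: ae_filter_eq_bot_iff)
qed

lemma reflect_lebesgue_measurable:
  assumes "\<psi> \<in> borel_measurable (lebesgue :: 'a::euclidean_space measure)"
  shows "(\<lambda>y. \<psi> (x - y)) \<in> borel_measurable lebesgue"
proof -
  have T: "(\<lambda>y::'a. x + (\<Sum>j\<in>Basis. ((\<lambda>_. - 1) j * (y \<bullet> j)) *\<^sub>R j)) \<in> lebesgue \<rightarrow>\<^sub>M lebesgue"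
    by (rule lebesgue_affine_measurable) simp
  have e: "(\<lambda>y::'a. x + (\<Sum>j\<in>Basis. ((\<lambda>_. - 1) j * (y \<bullet> j)) *\<^sub>R j)) = (\<lambda>y. x - y)"
  proof (rule ext)
    fix y :: 'a
    have "(\<Sum>j\<in>Basis. ((\<lambda>_. - 1) j * (y \<bullet> j)) *\<^sub>R j) = - (\<Sum>j\<in>Basis. (y \<bullet> j) *\<^sub>R j)"
      by (simp add: sum_negf[symmetric])
    then show "x + (\<Sum>j\<in>Basis. ((\<lambda>_. - 1) j * (y \<bullet> j)) *\<^sub>R j) = x - y"
      by (simp add: euclidean_representation)
  qed
  show ?thesis using measurable_compose[OF T[unfolded e] assms] by (simp add: o_def)
qed

theorem mainTheorem18:
  fixes \<psi> f :: "'a::euclidean_space \<Rightarrow> real" and a b c :: real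
  assumes psi_L1: "integrable lebesgue \<psi>"
    and psi_Linf: "Linf_norm \<psi> < \<infinity>"
    and psi_hat0: "Re (fourier_transform \<psi> 0) \<ge> 0"
    and a_def: "a = real_of_ereal (Linf_norm \<psi>)"
    and b_def: "b = (\<integral>x. \<bar>\<psi> x\<bar> \<partial>lebesgue)"
    and c_pos: "c > 0"
    and c_bound: "\<And>\<xi>. \<xi> \<in> cball 0 1 \<Longrightarrow> c * norm (fourier_transform \<psi> \<xi>) \<ge> 1"
    and f_PW: "f \<in> PW"
    and f_nonzero: "f \<noteq> (\<lambda>x. 0)"
    and f_int: "(\<integral>x. f x \<partial>lebesgue) \<le> 0"
  shows "emeasure lebesgue {x. f x < 0} * emeasure lebesgue {\<xi>. convolution f \<psi> \<xi> < 0}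
           \<ge> ennreal (1 / (16 * a^2 * b^2 * c^4))
         \<and> (\<forall>r1 r2. r1 > 0 \<longrightarrow> r2 > 0 \<longrightarrow> (\<forall>x. norm x \<ge> r1 \<longrightarrow> f x \<ge> 0) \<longrightarrow>
           (\<forall>\<xi>. norm \<xi> \<ge> r2 \<longrightarrow> convolution f \<psi> \<xi> \<ge> 0) \<longrightarrow>
           r1 * r2 \<ge> (16 * a^2 * b^2 * c^4 * (measure lebesgue (cball (0::'a) 1))^2) powr (- 1 / real DIM('a)))"
proof -
  from f_PW have f_cont: "continuous_on UNIV f" and f_L1: "integrable lebesgue f"
    and f_supp: "closure {\<xi>. fourier_transform f \<xi> \<noteq> 0} \<subseteq> cball 0 1" by (auto simp: PW_def)
  have fm[measurable]: "f \<in> borel_measurable borel" using f_cont by (rule borel_measurable_continuous_onI)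
  have fi: "integrable lborel f" using f_L1 by (simp add: integrable_completion)
  have FT_f: "fourier_transform f \<xi> = FTb f \<xi>" for \<xi>
    unfolding fourier_transform_def FTb_def by (rule integral_completion) measurable
  define Fh where "Fh = FTb f"
  have Fhm[measurable]: "Fh \<in> borel_measurable borel" unfolding Fh_def by measurable
  have Fh_supp: "Fh \<xi> = 0" if "\<xi> \<notin> cball 0 1" for \<xi>
    using that f_supp closure_subset[of "{\<xi>. fourier_transform f \<xi> \<noteq> 0}"] unfolding Fh_def FT_f by auto
  define I1 where "I1 = (\<integral>x. \<bar>f x\<bar> \<partial>lborel)"
  have Fh_bound: "norm (Fh \<xi>) \<le> I1" for \<xi> unfolding Fh_def I1_def by (rule FTb_bound[OF fi])
  have Fh_int: "integrable lborel Fh"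
  proof (rule Bochner_Integration.integrable_bound[of _ "\<lambda>\<xi>. I1 * indicator (cball (0::'a) 1) \<xi>"])
    have "emeasure lborel (cball (0::'a) 1) < \<infinity>" by (simp add: emeasure_cball)
    then show "integrable lborel (\<lambda>\<xi>. I1 * indicator (cball (0::'a) 1) \<xi>)"
      by (intro integrable_mult_right integrable_real_indicator) auto
    show "Fh \<in> borel_measurable lborel" by simp
    show "AE \<xi> in lborel. norm (Fh \<xi>) \<le> norm (I1 * indicator (cball (0::'a) 1) \<xi>)"
    proof (intro AE_I2)
      fix \<xi> :: 'a
      have "I1 \<ge> 0" unfolding I1_def by simp
      then show "norm (Fh \<xi>) \<le> norm (I1 * indicator (cball (0::'a) 1) \<xi>)"
        using Fh_bound[of \<xi>] Fh_supp[of \<xi>] by (cases "\<xi> \<in> cball 0 1") auto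
    qed
  qed
  have f_inv: "complex_of_real (f x) = (\<integral>\<xi>. Fh \<xi> * cis (2 * pi * (x \<bullet> \<xi>)) \<partial>lborel)" for x
    unfolding Fh_def by (rule fourier_inversion[OF f_cont fi Fh_int[unfolded Fh_def]])
  define I2 where "I2 = (\<integral>\<xi>. norm (Fh \<xi>) \<partial>lborel)"
  have f_bnd: "\<bar>f x\<bar> \<le> I2" for x
  proof -
    have "\<bar>f x\<bar> = norm (complex_of_real (f x))" by simp
    also have "\<dots> \<le> (\<integral>\<xi>. norm (Fh \<xi> * cis (2 * pi * (x \<bullet> \<xi>))) \<partial>lborel)"
      unfolding f_inv by (rule integral_norm_bound)
    also have "\<dots> = I2" unfolding I2_def by (simp add: norm_mult)
    finally show ?thesis .
  qed
  have f_int': "integral\<^sup>L lborel f \<le> 0" using f_int by (simp add: integral_completion)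

  have \<psi>m: "\<psi> \<in> borel_measurable lebesgue" using psi_L1 by (rule borel_measurable_integrable)
  obtain p where pm': "p \<in> borel_measurable lborel" and pae: "AE x in lborel. \<psi> x = p x"
    using completion_ex_borel_measurable_real[OF \<psi>m] by blast
  have pm[measurable]: "p \<in> borel_measurable borel" using pm' by simp
  have pmL: "p \<in> borel_measurable lebesgue" using pm' by (rule measurable_completion)
  have pae': "AE x in lebesgue. \<psi> x = p x" using pae by (rule AE_completion)
  have piL: "integrable lebesgue p" by (rule integrable_cong_AE_imp[OF psi_L1 pmL pae'])
  have pi: "integrable lborel p" using piL by (simp add: integrable_completion)
  have b_eq: "b = (\<integral>x. \<bar>p x\<bar> \<partial>lborel)"
  proof -
    have "b = (\<integral>x. \<bar>p x\<bar> \<partial>lebesgue)"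
      unfolding b_def using \<psi>m pmL pae' by (intro Bochner_Integration.integral_cong_AE) (auto elim!: eventually_mono)
    also have "\<dots> = (\<integral>x. \<bar>p x\<bar> \<partial>lborel)" by (rule integral_completion) measurable
    finally show ?thesis .
  qed
  have FT_\<psi>: "fourier_transform \<psi> \<xi> = FTb p \<xi>" for \<xi>
  proof -
    have "fourier_transform \<psi> \<xi> = (\<integral>x. complex_of_real (p x) * cis (- 2 * pi * (x \<bullet> \<xi>)) \<partial>lebesgue)"
      unfolding fourier_transform_def
    proof (rule Bochner_Integration.integral_cong_AE)
      have cm: "(\<lambda>x::'a. cis (- 2 * pi * (x \<bullet> \<xi>))) \<in> borel_measurable lebesgue"
        by (rule measurable_completion) measurable
      show "(\<lambda>x. complex_of_real (\<psi> x) * cis (- 2 * pi * (x \<bullet> \<xi>))) \<in> borel_measurable lebesgue"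
        using \<psi>m cm by measurable
      show "(\<lambda>x. complex_of_real (p x) * cis (- 2 * pi * (x \<bullet> \<xi>))) \<in> borel_measurable lebesgue"
        using pmL cm by measurable
      show "AE x in lebesgue. complex_of_real (\<psi> x) * cis (- 2 * pi * (x \<bullet> \<xi>)) = complex_of_real (p x) * cis (- 2 * pi * (x \<bullet> \<xi>))"
        using pae' by eventually_elim simp
    qed
    also have "\<dots> = FTb p \<xi>" unfolding FTb_def by (rule integral_completion) measurable
    finally show ?thesis .
  qed
  define P where "P = FTb p"
  have Pm[measurable]: "P \<in> borel_measurable borel" unfolding P_def by measurable
  have P_bound: "norm (P \<xi>) \<le> b" for \<xi> unfolding P_def b_eq by (rule FTb_bound[OF pi])
  have P_lower: "c * norm (P \<xi>) \<ge> 1" if "\<xi> \<in> cball 0 1" for \<xi>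
    using c_bound[OF that] unfolding FT_\<psi> P_def .
  have bc: "b * c \<ge> 1"
  proof -
    have "1 \<le> c * norm (P 0)" by (rule P_lower) simp
    also have "\<dots> \<le> c * b" using P_bound[of 0] c_pos by simp
    finally show ?thesis by (simp add: mult.commute)
  qed
  have a_bound: "AE x in lborel. \<bar>p x\<bar> \<le> a"
  proof -
    have ae1: "AE x in lebesgue. ereal \<bar>\<psi> x\<bar> \<le> Linf_norm \<psi>"
      unfolding Linf_norm_def by (rule esssup_AE)
    have "Linf_norm \<psi> \<noteq> - \<infinity>"
    proof
      assume "Linf_norm \<psi> = - \<infinity>"
      then have "AE x in (lborel :: 'a measure). False" using ae1 by (simp add: AE_completion_iff)
      then show False by (rule lborel_AE_const)
    qed
    then have L: "Linf_norm \<psi> = ereal a" using psi_Linf unfolding a_def by (cases "Linf_norm \<psi>") auto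
    have "AE x in lborel. \<bar>\<psi> x\<bar> \<le> a" using ae1 unfolding L by (simp add: AE_completion_iff)
    then show ?thesis using pae by eventually_elim simp
  qed
  have a0: "a \<ge> 0"
  proof -
    have "AE x in (lborel :: 'a measure). 0 \<le> a" using a_bound by eventually_elim (rule order_trans[OF abs_ge_zero])
    then show ?thesis by (rule lborel_AE_const)
  qed

  define g where "g = conv f p"
  have conv_eq: "convolution f \<psi> x = g x" for x
  proof -
    have rm: "(\<lambda>y. \<psi> (x - y)) \<in> borel_measurable lebesgue"
      by (rule reflect_lebesgue_measurable[OF \<psi>m])
    have fmL: "f \<in> borel_measurable lebesgue" by (rule measurable_completion) simp
    have pmr: "(\<lambda>y. p (x - y)) \<in> borel_measurable lebesgue" by (rule measurable_completion) measurable
    have "convolution f \<psi> x = (\<integral>y. f y * p (x - y) \<partial>lebesgue)"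
      unfolding Defs.convolution_def
    proof (rule Bochner_Integration.integral_cong_AE)
      show "(\<lambda>y. f y * \<psi> (x - y)) \<in> borel_measurable lebesgue" using fmL rm by measurable
      show "(\<lambda>y. f y * p (x - y)) \<in> borel_measurable lebesgue" using fmL pmr by measurable
      have "AE y in lborel. \<psi> (x - y) = p (x - y)" by (rule reflect_AE[OF pae])
      then have "AE y in lebesgue. \<psi> (x - y) = p (x - y)" by (rule AE_completion)
      then show "AE y in lebesgue. f y * \<psi> (x - y) = f y * p (x - y)" by eventually_elim simp
    qed
    also have "\<dots> = g x" unfolding g_def conv_def by (rule integral_completion) measurable
    finally show ?thesis .
  qed
  have gi: "integrable lborel g" unfolding g_def by (rule conv_int[OF fm pm fi pi])
  have gm[measurable]: "g \<in> borel_measurable borel" using gi by (simp add: borel_measurable_integrable)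
  have g_bnd: "\<bar>g x\<bar> \<le> a * I1" for x unfolding g_def I1_def by (rule conv_bound[OF fm pm fi a_bound])
  have Gh: "FTb g \<xi> = Fh \<xi> * P \<xi>" for \<xi> unfolding g_def Fh_def P_def by (rule conv_FT[OF fm pm fi pi])
  have g_inv: "complex_of_real (g x) = (\<integral>\<xi>. Fh \<xi> * P \<xi> * cis (2 * pi * (x \<bullet> \<xi>)) \<partial>lborel)" for x
    unfolding g_def P_def by (rule conv_inv[OF fm pm pi Fh_int f_inv])
  have FP_int: "integrable lborel (\<lambda>\<xi>. Fh \<xi> * P \<xi>)"
  proof (rule Bochner_Integration.integrable_bound[of _ "\<lambda>\<xi>. b * norm (Fh \<xi>)"])
    show "integrable lborel (\<lambda>\<xi>. b * norm (Fh \<xi>))" using Fh_int by simp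
    show "(\<lambda>\<xi>. Fh \<xi> * P \<xi>) \<in> borel_measurable lborel" by simp
    show "AE \<xi> in lborel. norm (Fh \<xi> * P \<xi>) \<le> norm (b * norm (Fh \<xi>))"
    proof (intro AE_I2)
      fix \<xi>
      have "norm (Fh \<xi> * P \<xi>) \<le> norm (Fh \<xi>) * b" unfolding norm_mult
        using P_bound[of \<xi>] by (intro mult_left_mono) auto
      also have "\<dots> \<le> norm (b * norm (Fh \<xi>))" by (simp add: abs_mult mult.commute mult_right_mono)
      finally show "norm (Fh \<xi> * P \<xi>) \<le> norm (b * norm (Fh \<xi>))" .
    qed
  qed

  define Nf where "Nf = (\<integral>x. f x * f x \<partial>lborel)"
  define Ng where "Ng = (\<integral>x. g x * g x \<partial>lborel)"
  have sq_int: "integrable lborel (\<lambda>\<xi>. (norm (h \<xi>))^2)"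
    if hi: "integrable lborel h" and hb: "\<And>\<xi>. norm (h \<xi>) \<le> C" for h :: "'a \<Rightarrow> complex" and C
  proof (rule Bochner_Integration.integrable_bound[of _ "\<lambda>\<xi>. C * norm (h \<xi>)"])
    show "integrable lborel (\<lambda>\<xi>. C * norm (h \<xi>))" using hi by simp
    show "(\<lambda>\<xi>. (norm (h \<xi>))^2) \<in> borel_measurable lborel" using hi by (simp add: borel_measurable_integrable)
    show "AE \<xi> in lborel. norm ((norm (h \<xi>))^2) \<le> norm (C * norm (h \<xi>))"
    proof (intro AE_I2)
      fix \<xi>
      have "(norm (h \<xi>))^2 \<le> C * norm (h \<xi>)" using hb[of \<xi>] by (simp add: power2_eq_square mult_right_mono)
      then show "norm ((norm (h \<xi>))^2) \<le> norm (C * norm (h \<xi>))" by simp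
    qed
  qed
  have Nf_eq: "Nf = (\<integral>\<xi>. (norm (Fh \<xi>))^2 \<partial>lborel)"
  proof -
    have "complex_of_real Nf = (\<integral>\<xi>. Fh \<xi> * cnj (FTb f \<xi>) \<partial>lborel)"
      unfolding Nf_def by (rule plancherel_gen[OF fm fi f_bnd Fh_int f_inv])
    also have "\<dots> = (\<integral>\<xi>. complex_of_real ((norm (Fh \<xi>))^2) \<partial>lborel)"
      unfolding Fh_def complex_norm_square ..
    also have "\<dots> = complex_of_real (\<integral>\<xi>. (norm (Fh \<xi>))^2 \<partial>lborel)" by (rule integral_complex_of_real)
    finally show ?thesis by simp
  qed
  have Ng_eq: "Ng = (\<integral>\<xi>. (norm (Fh \<xi> * P \<xi>))^2 \<partial>lborel)"
  proof -
    have "complex_of_real Ng = (\<integral>\<xi>. Fh \<xi> * P \<xi> * cnj (FTb g \<xi>) \<partial>lborel)"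
      unfolding Ng_def by (rule plancherel_gen[OF gm gi g_bnd FP_int g_inv])
    also have "\<dots> = (\<integral>\<xi>. complex_of_real ((norm (Fh \<xi> * P \<xi>))^2) \<partial>lborel)"
      unfolding Gh complex_norm_square ..
    also have "\<dots> = complex_of_real (\<integral>\<xi>. (norm (Fh \<xi> * P \<xi>))^2 \<partial>lborel)" by (rule integral_complex_of_real)
    finally show ?thesis by simp
  qed
  have Nf_le: "Nf \<le> c^2 * Ng"
  proof -
    have i1: "integrable lborel (\<lambda>\<xi>. (norm (Fh \<xi>))^2)" by (rule sq_int[OF Fh_int Fh_bound])
    have "norm (Fh \<xi> * P \<xi>) \<le> I1 * b" for \<xi>
      unfolding norm_mult using Fh_bound[of \<xi>] P_bound[of \<xi>] by (intro mult_mono) (auto simp: I1_def)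
    then have i2: "integrable lborel (\<lambda>\<xi>. (norm (Fh \<xi> * P \<xi>))^2)" by (rule sq_int[OF FP_int])
    have "Nf \<le> (\<integral>\<xi>. c^2 * (norm (Fh \<xi> * P \<xi>))^2 \<partial>lborel)"
      unfolding Nf_eq
    proof (rule integral_mono[OF i1])
      show "integrable lborel (\<lambda>\<xi>. c^2 * (norm (Fh \<xi> * P \<xi>))^2)" using i2 by simp
      fix \<xi> :: 'a
      show "(norm (Fh \<xi>))^2 \<le> c^2 * (norm (Fh \<xi> * P \<xi>))^2"
      proof (cases "\<xi> \<in> cball 0 1")
        case True
        have "1 \<le> (c * norm (P \<xi>))^2" using P_lower[OF True] by (simp add: one_le_power)
        then have "(norm (Fh \<xi>))^2 * 1 \<le> (norm (Fh \<xi>))^2 * (c * norm (P \<xi>))^2"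
          by (intro mult_left_mono) auto
        then show ?thesis by (simp add: norm_mult power_mult_distrib mult_ac)
      next
        case False
        then show ?thesis using Fh_supp[OF False] by simp
      qed
    qed
    also have "\<dots> = c^2 * Ng" unfolding Ng_eq by simp
    finally show ?thesis .
  qed
  have Ng0: "Ng \<ge> 0" unfolding Ng_def by simp
  define IG where "IG = (\<integral>x. \<bar>g x\<bar> \<partial>lborel)"
  have Ng_le: "Ng \<le> a * I1 * IG"
  proof -
    have "Ng \<le> (\<integral>x. (a * I1) * \<bar>g x\<bar> \<partial>lborel)"
      unfolding Ng_def
    proof (rule integral_mono)
      show "integrable lborel (\<lambda>x. g x * g x)"
      proof (rule Bochner_Integration.integrable_bound[of _ "\<lambda>x. (a * I1) * g x"])
        show "integrable lborel (\<lambda>x. (a * I1) * g x)" using gi by simp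
        show "(\<lambda>x. g x * g x) \<in> borel_measurable lborel" by simp
        show "AE x in lborel. norm (g x * g x) \<le> norm ((a * I1) * g x)"
        proof (intro AE_I2)
          fix x
          have "\<bar>g x\<bar> * \<bar>g x\<bar> \<le> (a * I1) * \<bar>g x\<bar>" using g_bnd[of x] by (intro mult_right_mono) auto
          moreover have "I1 \<ge> 0" using I1_def by simp
          ultimately show "norm (g x * g x) \<le> norm ((a * I1) * g x)" using a0 by (simp add: abs_mult)
        qed
      qed
      show "integrable lborel (\<lambda>x. (a * I1) * \<bar>g x\<bar>)" using gi by simp
      fix x
      show "g x * g x \<le> (a * I1) * \<bar>g x\<bar>"
      proof -
        have "g x * g x \<le> \<bar>g x\<bar> * \<bar>g x\<bar>" by (simp add: abs_mult[symmetric])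
        also have "\<dots> \<le> (a * I1) * \<bar>g x\<bar>" using g_bnd[of x] by (intro mult_right_mono) auto
        finally show ?thesis .
      qed
    qed
    also have "\<dots> = a * I1 * IG" unfolding IG_def by simp
    finally show ?thesis .
  qed
  have FTb0: "FTb u 0 = complex_of_real (integral\<^sup>L lborel u)" for u :: "'a \<Rightarrow> real"
    unfolding FTb_def by simp
  have p_int0: "integral\<^sup>L lborel p \<ge> 0" using psi_hat0 unfolding FT_\<psi> FTb0 by simp
  have g_int: "integral\<^sup>L lborel g \<le> 0"
  proof -
    have "complex_of_real (integral\<^sup>L lborel g) = complex_of_real (integral\<^sup>L lborel f * integral\<^sup>L lborel p)"
      using Gh[of 0] unfolding FTb0 Fh_def P_def by simp
    then have "integral\<^sup>L lborel g = integral\<^sup>L lborel f * integral\<^sup>L lborel p" by (simp only: of_real_eq_iff)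
    then show ?thesis using f_int' p_int0 by (simp add: mult_nonpos_nonneg)
  qed
  have f_from_Fh: "False" if "\<And>\<xi>. Fh \<xi> = 0"
  proof -
    have "f x = 0" for x using f_inv[of x] that by simp
    then show False using f_nonzero by auto
  qed
  have I1_pos: "I1 > 0"
  proof -
    have "I1 \<ge> 0" unfolding I1_def by simp
    moreover have "I1 \<noteq> 0"
    proof
      assume "I1 = 0"
      then have "Fh \<xi> = 0" for \<xi> unfolding Fh_def I1_def by (rule FTb_zero_if_abs_zero[OF fm fi])
      then show False by (rule f_from_Fh)
    qed
    ultimately show ?thesis by simp
  qed
  have IG_pos: "IG > 0"
  proof -
    have "IG \<ge> 0" unfolding IG_def by simp
    moreover have "IG \<noteq> 0"
    proof
      assume "IG = 0"
      then have z: "FTb g \<xi> = 0" for \<xi> unfolding IG_def by (rule FTb_zero_if_abs_zero[OF gm gi])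
      have "Fh \<xi> = 0" for \<xi>
      proof (cases "\<xi> \<in> cball 0 1")
        case True
        then have "P \<xi> \<noteq> 0" using P_lower[OF True] by auto
        then show ?thesis using z[of \<xi>] unfolding Gh by simp
      next
        case False then show ?thesis by (rule Fh_supp)
      qed
      then show False by (rule f_from_Fh)
    qed
    ultimately show ?thesis by simp
  qed

  define A where "A = {x. f x < 0}"
  define B where "B = {x. g x < 0}"
  have Am[measurable]: "A \<in> sets borel" unfolding A_def by measurable
  have Bm[measurable]: "B \<in> sets borel" unfolding B_def by measurable
  define JA where "JA = (\<integral>x. indicator A x * \<bar>f x\<bar> \<partial>lborel)"
  define JB where "JB = (\<integral>x. indicator B x * \<bar>g x\<bar> \<partial>lborel)"
  have I1_le: "I1 \<le> 2 * JA" unfolding I1_def JA_def A_def by (rule half_bound[OF fm fi f_int'])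
  have IG_le: "IG \<le> 2 * JB" unfolding IG_def JB_def B_def by (rule half_bound[OF gm gi g_int])
  have EA_pos: "emeasure lborel A > 0"
    by (rule pos_measure_if_int_pos[OF Am, of "\<lambda>x. \<bar>f x\<bar>"]) (use I1_le I1_pos in \<open>simp add: JA_def\<close>)
  have EB_pos: "emeasure lborel B > 0"
    by (rule pos_measure_if_int_pos[OF Bm, of "\<lambda>x. \<bar>g x\<bar>"]) (use IG_le IG_pos in \<open>simp add: JB_def\<close>)
  have EA_eq: "emeasure lebesgue {x. f x < 0} = emeasure lborel A"
    unfolding A_def[symmetric] using Am by simp
  have conv_fun: "(\<lambda>\<xi>. convolution f \<psi> \<xi>) = g" using conv_eq by (rule ext)
  have EB_eq: "emeasure lebesgue {\<xi>. convolution f \<psi> \<xi> < 0} = emeasure lborel B"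
    unfolding conv_eq B_def[symmetric] using Bm by simp
  have ff: "integrable lborel (\<lambda>x. f x * f x)"
  proof (rule Bochner_Integration.integrable_bound[of _ "\<lambda>x. I2 * f x"])
    show "integrable lborel (\<lambda>x. I2 * f x)" using fi by simp
    show "(\<lambda>x. f x * f x) \<in> borel_measurable lborel" by simp
    show "AE x in lborel. norm (f x * f x) \<le> norm (I2 * f x)"
    proof (intro AE_I2)
      fix x
      have "\<bar>f x\<bar> * \<bar>f x\<bar> \<le> I2 * \<bar>f x\<bar>" using f_bnd[of x] by (intro mult_right_mono) auto
      moreover have "I2 \<ge> 0" unfolding I2_def by simp
      ultimately show "norm (f x * f x) \<le> norm (I2 * f x)" by (simp add: abs_mult)
    qed
  qed
  have gg: "integrable lborel (\<lambda>x. g x * g x)"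
  proof (rule Bochner_Integration.integrable_bound[of _ "\<lambda>x. (a * I1) * g x"])
    show "integrable lborel (\<lambda>x. (a * I1) * g x)" using gi by simp
    show "(\<lambda>x. g x * g x) \<in> borel_measurable lborel" by simp
    show "AE x in lborel. norm (g x * g x) \<le> norm ((a * I1) * g x)"
    proof (intro AE_I2)
      fix x
      have "\<bar>g x\<bar> * \<bar>g x\<bar> \<le> (a * I1) * \<bar>g x\<bar>" using g_bnd[of x] by (intro mult_right_mono) auto
      moreover have "I1 \<ge> 0" using I1_def by simp
      ultimately show "norm (g x * g x) \<le> norm ((a * I1) * g x)" using a0 by (simp add: abs_mult)
    qed
  qed
  have finite_case: "1 / (16 * a^2 * b^2 * c^4) \<le> measure lborel A * measure lborel B"
    if EAf: "emeasure lborel A < \<infinity>" and EBf: "emeasure lborel B < \<infinity>"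
  proof -
    have csA: "JA^2 \<le> measure lborel A * Nf"
      unfolding JA_def Nf_def A_def by (rule cs_part[OF fm fi ff EAf[unfolded A_def]])
    have csB: "JB^2 \<le> measure lborel B * Ng"
      unfolding JB_def Ng_def B_def by (rule cs_part[OF gm gi gg EBf[unfolded B_def]])
    have h1: "I1^2 \<le> 4 * measure lborel A * Nf"
    proof -
      have "I1^2 \<le> (2 * JA)^2" using I1_le I1_pos by (intro power_mono) auto
      also have "\<dots> = 4 * JA^2" by (simp add: power_mult_distrib)
      finally show ?thesis using csA by simp
    qed
    have h2: "IG^2 \<le> 4 * measure lborel B * Ng"
    proof -
      have "IG^2 \<le> (2 * JB)^2" using IG_le IG_pos by (intro power_mono) auto
      also have "\<dots> = 4 * JB^2" by (simp add: power_mult_distrib)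
      finally show ?thesis using csB by simp
    qed
    have "1 \<le> 16 * measure lborel A * measure lborel B * a^2 * c^2"
      by (rule key_ineq[OF I1_pos IG_pos _ _ h1 h2 Nf_le Ng0 Ng_le]) auto
    then show ?thesis by (intro const_numeric[OF a0 c_pos bc]) auto
  qed
  have part1: "emeasure lebesgue {x. f x < 0} * emeasure lebesgue {\<xi>. convolution f \<psi> \<xi> < 0}
           \<ge> ennreal (1 / (16 * a^2 * b^2 * c^4))"
  proof (cases "emeasure lborel A < \<infinity> \<and> emeasure lborel B < \<infinity>")
    case True
    then have "emeasure lborel A = ennreal (measure lborel A)" "emeasure lborel B = ennreal (measure lborel B)"
      by (auto simp: emeasure_eq_ennreal_measure)
    then have "emeasure lborel A * emeasure lborel B = ennreal (measure lborel A * measure lborel B)"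
      by (simp add: ennreal_mult)
    moreover have "ennreal (1 / (16 * a^2 * b^2 * c^4)) \<le> ennreal (measure lborel A * measure lborel B)"
      using finite_case True by (intro ennreal_leI) auto
    ultimately show ?thesis unfolding EA_eq EB_eq by simp
  next
    case False
    then have "emeasure lborel A * emeasure lborel B = \<infinity>"
      using EA_pos EB_pos by (auto simp: ennreal_mult_eq_top_iff less_top[symmetric])
    then show ?thesis unfolding EA_eq EB_eq by simp
  qed
  define V where "V = unit_ball_vol (real DIM('a))"
  have V0: "V \<ge> 0" unfolding V_def by simp
  have ball_meas: "emeasure lborel (ball (0::'a) r) = ennreal (V * r ^ DIM('a))" if "r \<ge> 0" for r
    unfolding V_def by (rule emeasure_ball[OF that])
  have cball_meas: "measure lebesgue (cball (0::'a) 1) = V"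
  proof -
    have "measure lebesgue (cball (0::'a) 1) = measure lborel (cball (0::'a) 1)" by simp
    also have "\<dots> = V" unfolding V_def by (simp add: measure_def emeasure_cball)
    finally show ?thesis .
  qed
  have part2: "r1 * r2 \<ge> (16 * a^2 * b^2 * c^4 * (measure lebesgue (cball (0::'a) 1))^2) powr (- 1 / real DIM('a))"
    if r1: "r1 > 0" and r2: "r2 > 0" and h1: "\<forall>x. norm x \<ge> r1 \<longrightarrow> f x \<ge> 0"
      and h2: "\<forall>\<xi>. norm \<xi> \<ge> r2 \<longrightarrow> convolution f \<psi> \<xi> \<ge> 0" for r1 r2
  proof -
    have AB: "A \<subseteq> ball 0 r1" using h1 unfolding A_def by (force simp: not_le[symmetric])
    have BB: "B \<subseteq> ball 0 r2" using h2 unfolding B_def conv_eq by (force simp: not_le[symmetric])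
    have EAl: "emeasure lborel A \<le> ennreal (V * r1 ^ DIM('a))"
      using emeasure_mono[OF AB, of lborel] ball_meas[of r1] r1 by simp
    have EBl: "emeasure lborel B \<le> ennreal (V * r2 ^ DIM('a))"
      using emeasure_mono[OF BB, of lborel] ball_meas[of r2] r2 by simp
    have EAf: "emeasure lborel A < \<infinity>" using EAl by (simp add: le_less_trans)
    have EBf: "emeasure lborel B < \<infinity>" using EBl by (simp add: le_less_trans)
    have mA: "measure lborel A \<le> V * r1 ^ DIM('a)"
      using EAl EAf V0 r1 by (simp add: emeasure_eq_ennreal_measure ennreal_le_iff)
    have mB: "measure lborel B \<le> V * r2 ^ DIM('a)"
      using EBl EBf V0 r2 by (simp add: emeasure_eq_ennreal_measure ennreal_le_iff)
    have "1 / (16 * a^2 * b^2 * c^4) \<le> measure lborel A * measure lborel B" by (rule finite_case[OF EAf EBf])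
    also have "\<dots> \<le> (V * r1 ^ DIM('a)) * (V * r2 ^ DIM('a))"
      using mA mB V0 r1 by (intro mult_mono) auto
    also have "\<dots> = V^2 * (r1 * r2) ^ DIM('a)" by (simp add: power_mult_distrib power2_eq_square mult_ac)
    finally have "1 / (16 * a^2 * b^2 * c^4) \<le> V^2 * (r1 * r2) ^ DIM('a)" .
    then have "r1 * r2 \<ge> (16 * a^2 * b^2 * c^4 * V^2) powr (- 1 / real DIM('a))"
      using r1 r2 V0 by (intro final_numeric) auto
    then show ?thesis unfolding cball_meas .
  qed
  show ?thesis using part1 part2 by blast

qed


end
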